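(* Let $(\Omega,\mathcal G,\mathbb P)$ be a probability space, $\mathcal F=(\mathcal F_t)_{t\in[0,\infty)}$ a filtration with $\mathcal F_\infty\subset\mathcal G$, and $X$ an $\mathbb R^d$-valued Lévy process relative to $\mathcal F$. Let $R:\Omega\to[0,\infty]$ be $\mathcal G$-measurable with $\mathbb P(R<\infty)>0$ and $\mathbb P'(\cdot):=\mathbb P(\cdot\mid R<\infty)$ on $\mathcal G|_{\{R<\infty\}}$. (I) Suppose $\mathcal F_R'$ is independent of $\Delta_RX$ under $\mathbb P'$, and let $P:\Omega\to[0,\infty]$ be $\mathcal G$-measurable with $\mathbb P(P<\infty)>0$ and $\llbracket P\rrbracket=A\cap\llbracket R\rrbracket$ for some $A\in\mathcal O\cup\sigma_{\Omega\times[0,\infty)}(\blacktriangle X)$. Set $\mathcal L'$ to be the law of $\Delta_RX$ under $\mathbb P'$ and $\mathbb P^{:}(F):=\mathbb P(F\mid P<\infty)$ for $F\in\mathcal G|_{\{P<\infty\}}$. (a) If $A\in\mathcal O$, then $\Delta_PX$ is independent of $\mathcal F_P'$ under $\mathbb P^{:}$ and the law of $\Delta_PX$ under $\mathbb P^{:}$ is $\mathcal L'$. (b) If $A=(\blacktriangle X)^{-1}(\Gamma)$ for some $\Gamma\in\mathcal D$, then $\Delta_PX$ is independent of $\mathcal F_P'$ under $\mathbb P^{:}$ and the law of $\Delta_PX$ under $\mathbb P^{:}$ is $\mathcal L'(\cdot\mid\Gamma)$. (II) Conversely, let $R_1,R_2:\Omega\to[0,\infty]$ be $\mathcal G$-measurable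 with $\mathbb P(R_i<\infty)>0$, set $\mathbb P^i(F):=\mathbb P(F\mid R_i<\infty)$ for $F\in\mathcal G|_{\{R_i<\infty\}}$, and suppose $\Delta_{R_i}X$ is independent of $\mathcal F_{R_i}'$ under $\mathbb P^i$ for $i\in\{1,2\}$. (i) If there is $A\in\mathcal O$ with, up to evanescence, $\llbracket R_1\rrbracket=\llbracket R\rrbracket\cap A$ and $\llbracket R_2\rrbracket=\llbracket R\rrbracket\cap A^c$, and if the law $\mathcal M$ of $\Delta_{R_1}X$ under $\mathbb P^1$ equals the law of $\Delta_{R_2}X$ under $\mathbb P^2$, then $\mathcal F_R'$ is independent of $\Delta_RX$ under $\mathbb P'$ and the law of $\Delta_RX$ under $\mathbb P'$ is $\mathcal M$. (ii) If there is $\Gamma\in\mathcal D$ with $\llbracket R_1\rrbracket=\llbracket R\rrbracket\cap\{\blacktriangle X\in\Gamma\}$ and $\llbracket R_2\rrbracket=\llbracket R\rrbracket\cap\{\blacktriangle X\notin\Gamma\}$, if $\mathcal F_R'$ is independent of $\mathbb 1_\Gamma(\Delta_RX)$ under $\mathbb P'$, and if there is a probability law $\mathcal M$ on $(\mathbb D,\mathcal D)$ with $\mathbb P'(\Delta_RX\in\Gamma)=\mathcal M(\Gamma)$, the law of $\Delta_{R_1}X$ under $\mathbb P^1$ equal to $\mathcal M(\cdot\mid\Gamma)$ and the law of $\Delta_{R_2}X$ under $\mathbb P^2$ equal to $\mathcal M(\cdot\mid\mathbb D\setminus\Gamma)$, then $\mathcal F_R'$ is independent of $\Delta_RX$ under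 $\mathbb P'$ and the law of $\Delta_RX$ under $\mathbb P'$ is $\mathcal M$.
   Context: $X$ being a Lévy process relative to $\mathcal F$ means: $X$ is $\mathcal F$-adapted, has càdlàg paths, $X_0=0$ a.s., and for $0\le s\le t$, $X_t-X_s$ is independent of $\mathcal F_s$ and has the law of $X_{t-s}$. $(\mathbb D,\mathcal D)$ is the space of càdlàg paths $[0,\infty)\to\mathbb R^d$ with the $\sigma$-field generated by the coordinate projections. For a random time $S$, on $\{S<\infty\}$, $\Delta_SX:=(X_{S+t}-X_S)_{t\ge0}$; $\blacktriangle X:\Omega\times[0,\infty)\to\mathbb D$ is $(\omega,t)\mapsto\Delta_tX(\omega)$, and $\sigma_{\Omega\times[0,\infty)}(\blacktriangle X)$ is the $\sigma$-field it generates. $\mathcal O$ is the optional $\sigma$-field on $\Omega\times[0,\infty)$, generated by the $\mathcal F$-adapted càdlàg real processes. For a random time $S$, $\mathcal F_S'$ is the $\sigma$-field on $\{S<\infty\}$ generated by $Z_S$ as $Z$ ranges over $\mathcal O$-measurable real processes. $\llbracket S\rrbracket=\{(\omega,t):S(\omega)=t\}$ is the graph of $S$ (in $\Omega\times[0,\infty)$). "Up to evanescence" means up to a set whose projection on $\Omega$ is contained in a $\mathbb P$-null set. *)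

theory Defs
  imports "HOL-Probability.Probability"
begin

definition cadlag :: "(real \<Rightarrow> 'v::topological_space) \<Rightarrow> bool" where
  "cadlag w \<longleftrightarrow> (\<forall>t\<ge>0. (w \<longlongrightarrow> w t) (at_right t)) \<and> (\<forall>t>0. \<exists>l. (w \<longlongrightarrow> l) (at_left t))"

text \<open>Path space D of cadlag paths [0,oo) -> R^d (paths normalised to 0 on negative times),
  with the sigma-field generated by the coordinate projections.\<close>
definition Dspace :: "(real \<Rightarrow> real ^ 'd) set" where
  "Dspace = {w. cadlag w \<and> (\<forall>s<0. w s = 0)}"

definition Dmeas :: "(real \<Rightarrow> real ^ 'd) measure" where
  "Dmeas = sigma Dspace {{w \<in> Dspace. w t \<in> B} | t B. 0 \<le> t \<and> B \<in> sets (borel :: (real ^ 'd) measure)}"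

definition filtration_on :: "'a measure \<Rightarrow> (real \<Rightarrow> 'a measure) \<Rightarrow> bool" where
  "filtration_on M F \<longleftrightarrow> (\<forall>t\<ge>0. subalgebra M (F t)) \<and>
     (\<forall>s t. 0 \<le> s \<longrightarrow> s \<le> t \<longrightarrow> sets (F s) \<subseteq> sets (F t))"

definition indep_rv :: "'a measure \<Rightarrow> 'a set set \<Rightarrow> ('a \<Rightarrow> 'b) \<Rightarrow> 'b measure \<Rightarrow> bool" where
  "indep_rv N \<A> Y Mv \<longleftrightarrow> prob_space.indep_set N \<A> {Y -` B \<inter> space N | B. B \<in> sets Mv}"

definition levy :: "'a measure \<Rightarrow> (real \<Rightarrow> 'a measure) \<Rightarrow> (real \<Rightarrow> 'a \<Rightarrow> real ^ 'd) \<Rightarrow> bool" where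
  "levy M F X \<longleftrightarrow>
     (\<forall>t\<ge>0. X t \<in> borel_measurable (F t)) \<and>
     (\<forall>\<omega>\<in>space M. cadlag (\<lambda>t. X t \<omega>)) \<and>
     (AE \<omega> in M. X 0 \<omega> = 0) \<and>
     (\<forall>s t. 0 \<le> s \<longrightarrow> s \<le> t \<longrightarrow>
        indep_rv M (sets (F s)) (\<lambda>\<omega>. X t \<omega> - X s \<omega>) borel \<and>
        distr M borel (\<lambda>\<omega>. X t \<omega> - X s \<omega>) = distr M borel (X (t - s)))"

definition optional :: "'a measure \<Rightarrow> (real \<Rightarrow> 'a measure) \<Rightarrow> ('a \<times> real) measure" where
  "optional M F = sigma (space M \<times> {0..})
     {{p \<in> space M \<times> {0..}. Z (snd p) (fst p) \<in> B} | (Z :: real \<Rightarrow> 'a \<Rightarrow> real) B.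
        (\<forall>t\<ge>0. Z t \<in> borel_measurable (F t)) \<and> (\<forall>\<omega>\<in>space M. cadlag (\<lambda>t. Z t \<omega>)) \<and>
        B \<in> sets (borel :: real measure)}"

definition fin :: "'a measure \<Rightarrow> ('a \<Rightarrow> ennreal) \<Rightarrow> 'a set" where
  "fin M S = {\<omega> \<in> space M. S \<omega> < \<infinity>}"

definition Fprime :: "'a measure \<Rightarrow> (real \<Rightarrow> 'a measure) \<Rightarrow> ('a \<Rightarrow> ennreal) \<Rightarrow> 'a measure" where
  "Fprime M F S = sigma (fin M S)
     {{\<omega> \<in> fin M S. Z (\<omega>, enn2real (S \<omega>)) \<in> B} | Z B.
        Z \<in> borel_measurable (optional M F) \<and> B \<in> sets (borel :: real measure)}"

definition shiftX :: "(real \<Rightarrow> 'a \<Rightarrow> real ^ 'd) \<Rightarrow> ('a \<Rightarrow> ennreal) \<Rightarrow> 'a \<Rightarrow> real \<Rightarrow> real ^ 'd" where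
  "shiftX X S \<omega> = (\<lambda>s. if 0 \<le> s then X (enn2real (S \<omega>) + s) \<omega> - X (enn2real (S \<omega>)) \<omega> else 0)"

definition blackX :: "(real \<Rightarrow> 'a \<Rightarrow> real ^ 'd) \<Rightarrow> 'a \<times> real \<Rightarrow> real \<Rightarrow> real ^ 'd" where
  "blackX X p = (\<lambda>s. if 0 \<le> s then X (snd p + s) (fst p) - X (snd p) (fst p) else 0)"

definition sigma_blackX :: "'a measure \<Rightarrow> (real \<Rightarrow> 'a \<Rightarrow> real ^ 'd) \<Rightarrow> ('a \<times> real) set set" where
  "sigma_blackX M X = {blackX X -` \<Gamma> \<inter> (space M \<times> {0..}) | \<Gamma>. \<Gamma> \<in> sets Dmeas}"

definition graph :: "'a measure \<Rightarrow> ('a \<Rightarrow> ennreal) \<Rightarrow> ('a \<times> real) set" where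
  "graph M S = {(\<omega>, t). \<omega> \<in> space M \<and> 0 \<le> t \<and> S \<omega> = ennreal t}"

definition cond_meas :: "'a measure \<Rightarrow> 'a set \<Rightarrow> 'a measure" where
  "cond_meas M A = uniform_measure (restrict_space M A) A"

definition evan_eq :: "'a measure \<Rightarrow> ('a \<times> real) set \<Rightarrow> ('a \<times> real) set \<Rightarrow> bool" where
  "evan_eq M S T \<longleftrightarrow> (\<exists>N \<in> null_sets M. fst ` ((S - T) \<union> (T - S)) \<subseteq> N)"

end

theory Submission
  imports Defs
begin


lemma cond_space: "A \<subseteq> space M \<Longrightarrow> space (cond_meas M A) = A"
  by (auto simp: cond_meas_def space_restrict_space)

lemma cond_sets: "A \<in> sets M \<Longrightarrow> B \<in> sets (cond_meas M A) \<longleftrightarrow> B \<subseteq> A \<and> B \<in> sets M"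
  unfolding cond_meas_def sets_uniform_measure
  by (subst sets_restrict_space_iff) (auto dest: sets.sets_into_space)

lemma cond_emeasure:
  assumes "prob_space M" "A \<in> sets M" "B \<in> sets M" "B \<subseteq> A"
  shows "emeasure (cond_meas M A) B = emeasure M B / emeasure M A"
proof -
  have "B \<in> sets (restrict_space M A)" using assms by (simp add: sets_restrict_space_iff)
  moreover have "A \<in> sets (restrict_space M A)" using assms by (simp add: sets_restrict_space_iff)
  ultimately show ?thesis using assms unfolding cond_meas_def
    by (simp add: emeasure_restrict_space Int_absorb1 Int_absorb2 sets.Int)
qed

lemma cond_prob:
  assumes "prob_space M" "A \<in> sets M" "measure M A > 0"
  shows "prob_space (cond_meas M A)"
proof -
  interpret prob_space M by fact
  have "A \<in> sets (restrict_space M A)" using assms by (simp add: sets_restrict_space_iff)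
  moreover have "emeasure (restrict_space M A) A = emeasure M A"
    using assms by (simp add: emeasure_restrict_space)
  ultimately show ?thesis unfolding cond_meas_def
    using assms by (intro prob_space_uniform_measure) (auto simp: emeasure_eq_measure)
qed

lemma cond_measure:
  assumes "prob_space M" "A \<in> sets M" "measure M A > 0" "B \<in> sets M" "B \<subseteq> A"
  shows "measure (cond_meas M A) B = measure M B / measure M A"
proof -
  interpret prob_space M by fact
  show ?thesis unfolding measure_def using cond_emeasure[OF assms(1,2,4,5)] assms
    by (simp add: emeasure_eq_measure divide_ennreal enn2real_ennreal)
qed



lemma indep_rv_cond_iff:
  assumes M: "prob_space M" and A: "A \<in> sets M" "measure M A > 0"
  shows "indep_rv (cond_meas M A) \<A> Y Mv \<longleftrightarrow>
    (\<forall>a\<in>\<A>. a \<in> sets M \<and> a \<subseteq> A) \<and> (\<forall>B\<in>sets Mv. Y -` B \<inter> A \<in> sets M) \<and>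
    (\<forall>a\<in>\<A>. \<forall>B\<in>sets Mv. measure M (a \<inter> (Y -` B \<inter> A)) * measure M A = measure M a * measure M (Y -` B \<inter> A))"
proof -
  interpret N: prob_space "cond_meas M A" using cond_prob[OF assms] .
  have sp: "space (cond_meas M A) = A" using A by (simp add: cond_space sets.sets_into_space)
  have ev: "\<And>B. B \<in> sets (cond_meas M A) \<longleftrightarrow> B \<subseteq> A \<and> B \<in> sets M" using cond_sets[OF A(1)] .
  have pr: "\<And>B. B \<in> sets M \<Longrightarrow> B \<subseteq> A \<Longrightarrow> measure (cond_meas M A) B = measure M B / measure M A"
    using cond_measure[OF assms] by blast
  have eq: "\<And>x a b. (x / measure M A = (a / measure M A) * (b / measure M A)) \<longleftrightarrow> x * measure M A = a * b"
    using A(2) by (auto simp: field_simps)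
  let ?P = "{Y -` B \<inter> A | B. B \<in> sets Mv}"
  have "indep_rv (cond_meas M A) \<A> Y Mv \<longleftrightarrow>
    \<A> \<subseteq> sets (cond_meas M A) \<and> ?P \<subseteq> sets (cond_meas M A) \<and>
    (\<forall>a\<in>\<A>. \<forall>b\<in>?P. measure (cond_meas M A) (a \<inter> b) = measure (cond_meas M A) a * measure (cond_meas M A) b)"
    unfolding indep_rv_def N.indep_sets2_eq sp
    apply (rule refl) done
  also have "\<dots> \<longleftrightarrow> (\<forall>a\<in>\<A>. a \<in> sets M \<and> a \<subseteq> A) \<and> (\<forall>B\<in>sets Mv. Y -` B \<inter> A \<in> sets M) \<and>
    (\<forall>a\<in>\<A>. \<forall>B\<in>sets Mv. measure M (a \<inter> (Y -` B \<inter> A)) * measure M A = measure M a * measure M (Y -` B \<inter> A))"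
  proof (rule iffI)
    assume h: "\<A> \<subseteq> sets (cond_meas M A) \<and> ?P \<subseteq> sets (cond_meas M A) \<and>
      (\<forall>a\<in>\<A>. \<forall>b\<in>?P. measure (cond_meas M A) (a \<inter> b) = measure (cond_meas M A) a * measure (cond_meas M A) b)"
    have c1: "\<forall>a\<in>\<A>. a \<in> sets M \<and> a \<subseteq> A"
    proof
      fix a assume "a \<in> \<A>" with h have "a \<in> sets (cond_meas M A)" by blast
      then show "a \<in> sets M \<and> a \<subseteq> A" using ev by blast
    qed
    have c2: "\<forall>B\<in>sets Mv. Y -` B \<inter> A \<in> sets M"
    proof
      fix B assume "B \<in> sets Mv" with h have "Y -` B \<inter> A \<in> sets (cond_meas M A)" by blast
      then show "Y -` B \<inter> A \<in> sets M" using ev by blast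
    qed
    have c3: "\<forall>a\<in>\<A>. \<forall>B\<in>sets Mv. measure M (a \<inter> (Y -` B \<inter> A)) * measure M A = measure M a * measure M (Y -` B \<inter> A)"
    proof (intro ballI)
      fix a B assume a: "a \<in> \<A>" and B: "B \<in> sets Mv"
      have aA: "a \<in> sets M" "a \<subseteq> A" using c1 a by blast+
      have bA: "Y -` B \<inter> A \<in> sets M" using c2 B by blast
      have "Y -` B \<inter> A \<in> ?P" using B by blast
      then have "measure (cond_meas M A) (a \<inter> (Y -` B \<inter> A)) = measure (cond_meas M A) a * measure (cond_meas M A) (Y -` B \<inter> A)"
        using h a by blast
      then have "measure M (a \<inter> (Y -` B \<inter> A)) / measure M A = (measure M a / measure M A) * (measure M (Y -` B \<inter> A) / measure M A)"
        using aA bA pr[of "a \<inter> (Y -` B \<inter> A)"] by (simp add: pr sets.Int Int_lower2 le_infI2)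
      then show "measure M (a \<inter> (Y -` B \<inter> A)) * measure M A = measure M a * measure M (Y -` B \<inter> A)"
        using eq by blast
    qed
    show "(\<forall>a\<in>\<A>. a \<in> sets M \<and> a \<subseteq> A) \<and> (\<forall>B\<in>sets Mv. Y -` B \<inter> A \<in> sets M) \<and>
    (\<forall>a\<in>\<A>. \<forall>B\<in>sets Mv. measure M (a \<inter> (Y -` B \<inter> A)) * measure M A = measure M a * measure M (Y -` B \<inter> A))"
      using c1 c2 c3 by blast
  next
    assume h: "(\<forall>a\<in>\<A>. a \<in> sets M \<and> a \<subseteq> A) \<and> (\<forall>B\<in>sets Mv. Y -` B \<inter> A \<in> sets M) \<and>
      (\<forall>a\<in>\<A>. \<forall>B\<in>sets Mv. measure M (a \<inter> (Y -` B \<inter> A)) * measure M A = measure M a * measure M (Y -` B \<inter> A))"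
    have c1: "\<A> \<subseteq> sets (cond_meas M A)" using h ev by auto
    have c2: "?P \<subseteq> sets (cond_meas M A)" using h ev by auto
    have c3: "\<forall>a\<in>\<A>. \<forall>b\<in>?P. measure (cond_meas M A) (a \<inter> b) = measure (cond_meas M A) a * measure (cond_meas M A) b"
    proof (intro ballI)
      fix a b assume a: "a \<in> \<A>" and b: "b \<in> ?P"
      then obtain B where B: "B \<in> sets Mv" "b = Y -` B \<inter> A" by blast
      have aA: "a \<in> sets M" "a \<subseteq> A" using h a by blast+
      have bA: "Y -` B \<inter> A \<in> sets M" using h B by blast
      have "measure M (a \<inter> (Y -` B \<inter> A)) * measure M A = measure M a * measure M (Y -` B \<inter> A)"
        using h a B by blast
      then have "measure M (a \<inter> (Y -` B \<inter> A)) / measure M A = (measure M a / measure M A) * (measure M (Y -` B \<inter> A) / measure M A)"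
        using eq by blast
      then show "measure (cond_meas M A) (a \<inter> b) = measure (cond_meas M A) a * measure (cond_meas M A) b"
        using aA bA B pr[of "a \<inter> (Y -` B \<inter> A)"] by (simp add: pr sets.Int le_infI2)
    qed
    show "\<A> \<subseteq> sets (cond_meas M A) \<and> ?P \<subseteq> sets (cond_meas M A) \<and>
      (\<forall>a\<in>\<A>. \<forall>b\<in>?P. measure (cond_meas M A) (a \<inter> b) = measure (cond_meas M A) a * measure (cond_meas M A) b)"
      using c1 c2 c3 by blast
  qed
  finally show ?thesis .
qed

lemma indep_rv_sigma:
  assumes N: "prob_space N" and st: "Int_stable G" and ind: "indep_rv N G Y Mv"
  shows "indep_rv N (sigma_sets (space N) G) Y Mv"
proof -
  interpret prob_space N by fact
  let ?P = "{Y -` B \<inter> space N | B. B \<in> sets Mv}"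
  have st2: "Int_stable ?P"
    unfolding Int_stable_def
    apply clarify
    subgoal for a b B1 B2 by (rule exI[of _ "B1 \<inter> B2"]) auto
    done
  have "indep_sets (case_bool G ?P) UNIV" using ind unfolding indep_rv_def indep_set_def .
  then have "indep_sets (\<lambda>i. sigma_sets (space N) (case_bool G ?P i)) UNIV"
    by (rule indep_sets_sigma) (auto split: bool.split simp: st st2)
  then have "indep_sets (case_bool (sigma_sets (space N) G) ?P) UNIV"
    by (rule indep_sets_mono_sets) (auto split: bool.split intro: sigma_sets.Basic)
  then show ?thesis unfolding indep_rv_def indep_set_def .
qed

definition gen :: "'a measure \<Rightarrow> (real \<Rightarrow> 'a measure) \<Rightarrow> ('a \<Rightarrow> ennreal) \<Rightarrow> 'a set set" where
  "gen M F S = {{\<omega> \<in> fin M S. Z (\<omega>, enn2real (S \<omega>)) \<in> B} | Z B.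
        Z \<in> borel_measurable (optional M F) \<and> B \<in> sets (borel :: real measure)}"

lemma sets_Fprime: "sets (Fprime M F S) = sigma_sets (fin M S) (gen M F S)"
  unfolding Fprime_def gen_def by (rule sets_measure_of) auto

lemma gen_Int_stable: "Int_stable (gen M F S)"
  unfolding Int_stable_def gen_def
proof clarify
  fix Z1 Z2 :: "'a \<times> real \<Rightarrow> real" and B1 B2
  assume Z: "Z1 \<in> borel_measurable (optional M F)" "B1 \<in> sets (borel :: real measure)"
    "Z2 \<in> borel_measurable (optional M F)" "B2 \<in> sets (borel :: real measure)"
  define Z where "Z = (\<lambda>p. if Z1 p \<in> B1 \<and> Z2 p \<in> B2 then 1 else (0::real))"
  have "Z \<in> borel_measurable (optional M F)" unfolding Z_def using Z by measurable
  then show "\<exists>Z B. {\<omega> \<in> fin M S. Z1 (\<omega>, enn2real (S \<omega>)) \<in> B1} \<inter> {\<omega> \<in> fin M S. Z2 (\<omega>, enn2real (S \<omega>)) \<in> B2} =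
            {\<omega> \<in> fin M S. Z (\<omega>, enn2real (S \<omega>)) \<in> B} \<and> Z \<in> borel_measurable (optional M F) \<and> (B::real set) \<in> sets borel"
    proof (intro exI conjI)
      show "{\<omega> \<in> fin M S. Z1 (\<omega>, enn2real (S \<omega>)) \<in> B1} \<inter> {\<omega> \<in> fin M S. Z2 (\<omega>, enn2real (S \<omega>)) \<in> B2} =
            {\<omega> \<in> fin M S. Z (\<omega>, enn2real (S \<omega>)) \<in> {1::real}}" by (auto simp: Z_def)
    qed auto
qed

lemma gen_subset: "a \<in> gen M F S \<Longrightarrow> a \<subseteq> fin M S"
  unfolding gen_def by auto

lemma gen_sub_Fprime: "gen M F S \<subseteq> sets (Fprime M F S)"
  unfolding sets_Fprime by (auto intro: sigma_sets.Basic)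



lemma shift_at_right:
  fixes f :: "real \<Rightarrow> 'b::topological_space"
  assumes "(f \<longlongrightarrow> l) (at_right (r + t))"
  shows "((\<lambda>s. f (r + s)) \<longlongrightarrow> l) (at_right t)"
proof -
  have "filterlim (\<lambda>s. r + s) (at_right (r + t)) (at_right t)"
    unfolding filterlim_at
    by (auto intro!: tendsto_eq_intros simp: eventually_at_filter)
  from filterlim_compose[OF assms this] show ?thesis .
qed

lemma shift_at_left:
  fixes f :: "real \<Rightarrow> 'b::topological_space"
  assumes "(f \<longlongrightarrow> l) (at_left (r + t))"
  shows "((\<lambda>s. f (r + s)) \<longlongrightarrow> l) (at_left t)"
proof -
  have "filterlim (\<lambda>s. r + s) (at_left (r + t)) (at_left t)"
    unfolding filterlim_at
    by (auto intro!: tendsto_eq_intros simp: eventually_at_filter)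
  from filterlim_compose[OF assms this] show ?thesis .
qed

lemma cadlag_shift:
  fixes x :: "real \<Rightarrow> real ^ 'd"
  assumes c: "cadlag x" and r: "0 \<le> r"
  shows "cadlag (\<lambda>s. if 0 \<le> s then x (r + s) - x r else 0)"
  unfolding cadlag_def
proof (intro conjI allI impI)
  fix t :: real assume t: "0 \<le> t"
  have "(x \<longlongrightarrow> x (r + t)) (at_right (r + t))" using c r t unfolding cadlag_def by auto
  then have "((\<lambda>s. x (r + s)) \<longlongrightarrow> x (r + t)) (at_right t)" by (rule shift_at_right)
  then have "((\<lambda>s. x (r + s) - x r) \<longlongrightarrow> x (r + t) - x r) (at_right t)"
    by (intro tendsto_diff tendsto_const)
  moreover have "eventually (\<lambda>s. x (r + s) - x r = (if 0 \<le> s then x (r + s) - x r else 0)) (at_right t)"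
    using eventually_at_right_less[of t] by eventually_elim (use t in auto)
  ultimately show "((\<lambda>s. if 0 \<le> s then x (r + s) - x r else 0) \<longlongrightarrow>
      (if 0 \<le> t then x (r + t) - x r else 0)) (at_right t)"
    using t by (simp add: tendsto_cong)
next
  fix t :: real assume t: "0 < t"
  obtain l where l: "(x \<longlongrightarrow> l) (at_left (r + t))" using c r t unfolding cadlag_def
    by (metis add_nonneg_pos)
  then have "((\<lambda>s. x (r + s)) \<longlongrightarrow> l) (at_left t)" by (rule shift_at_left)
  then have "((\<lambda>s. x (r + s) - x r) \<longlongrightarrow> l - x r) (at_left t)"
    by (intro tendsto_diff tendsto_const)
  moreover have "eventually (\<lambda>s. x (r + s) - x r = (if 0 \<le> s then x (r + s) - x r else 0)) (at_left t)"
    using t by (auto simp: eventually_at_left_field intro!: exI[of _ 0])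
  ultimately show "\<exists>l. ((\<lambda>s. if 0 \<le> s then x (r + s) - x r else 0) \<longlongrightarrow> l) (at_left t)"
    by (auto simp: tendsto_cong)
qed

lemma space_Dmeas: "space Dmeas = Dspace"
  unfolding Dmeas_def by (rule space_measure_of) auto

lemma sets_Dmeas: "sets Dmeas = sigma_sets Dspace {{w \<in> Dspace. w t \<in> B} | t B. 0 \<le> t \<and> B \<in> sets (borel :: (real ^ 'd) measure)}"
  unfolding Dmeas_def by (rule sets_measure_of) auto

lemma shiftX_in_D:
  assumes "cadlag (\<lambda>t. X t \<omega>)"
  shows "shiftX X S \<omega> \<in> Dspace"
  unfolding Dspace_def shiftX_def
  using cadlag_shift[OF assms, of "enn2real (S \<omega>)"] by auto

lemma blackX_shiftX: "S \<omega> = ennreal t \<Longrightarrow> 0 \<le> t \<Longrightarrow> blackX X (\<omega>, t) = shiftX X S \<omega>"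
  unfolding blackX_def shiftX_def by auto



lemma rc_seq:
  fixes g :: "real \<Rightarrow> 'b::topological_space"
  assumes rc: "(g \<longlongrightarrow> g t) (at_right t)" and ge: "\<And>n. t \<le> u n" and lim: "u \<longlonglongrightarrow> t"
  shows "(\<lambda>n. g (u n)) \<longlonglongrightarrow> g t"
proof (rule topological_tendstoI)
  fix S assume S: "open S" "g t \<in> S"
  have "eventually (\<lambda>s. g s \<in> S) (at_right t)" using rc S(1) S(2) by (rule topological_tendstoD)
  then obtain b where b: "b > t" "\<And>y. t < y \<Longrightarrow> y < b \<Longrightarrow> g y \<in> S"
    by (auto simp: eventually_at_right_field)
  have "eventually (\<lambda>n. u n < b) sequentially" using lim b(1) by (rule order_tendstoD)
  then show "eventually (\<lambda>n. g (u n) \<in> S) sequentially"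
  proof eventually_elim
    case (elim n)
    show ?case
    proof (cases "u n = t")
      case True then show ?thesis using S by simp
    next
      case False then show ?thesis using ge[of n] elim b by auto
    qed
  qed
qed

lemma dyadic_bounds:
  fixes x :: real assumes "0 \<le> x"
  shows "x \<le> real (nat \<lceil>x * 2^n\<rceil>) / 2^n" "real (nat \<lceil>x * 2^n\<rceil>) / 2^n < x + 1 / 2^n"
proof -
  have c: "real (nat \<lceil>x * 2^n\<rceil>) = of_int \<lceil>x * 2^n\<rceil>" using assms by simp
  have "x * 2^n \<le> of_int \<lceil>x * 2^n\<rceil>" by (rule le_of_int_ceiling)
  then show "x \<le> real (nat \<lceil>x * 2^n\<rceil>) / 2^n" unfolding c by (simp add: field_simps)
  have "of_int \<lceil>x * 2^n\<rceil> < x * 2^n + 1" using ceiling_correct[of "x * 2^n"] by linarith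
  then show "real (nat \<lceil>x * 2^n\<rceil>) / 2^n < x + 1 / 2^n" unfolding c by (simp add: field_simps)
qed

lemma dyadic_lim:
  fixes x :: real assumes "0 \<le> x"
  shows "(\<lambda>n. real (nat \<lceil>x * 2^n\<rceil>) / 2^n) \<longlonglongrightarrow> x"
proof (rule tendsto_sandwich[of "\<lambda>n. x" _ _ "\<lambda>n. x + 1 / 2^n"])
  show "eventually (\<lambda>n. x \<le> real (nat \<lceil>x * 2^n\<rceil>) / 2^n) sequentially"
    using dyadic_bounds(1)[OF assms] by simp
  show "eventually (\<lambda>n. real (nat \<lceil>x * 2^n\<rceil>) / 2^n \<le> x + 1 / 2^n) sequentially"
    using dyadic_bounds(2)[OF assms] by (simp add: less_imp_le)
  have "(\<lambda>n. (1/2::real)^n) \<longlonglongrightarrow> 0" by (rule LIMSEQ_realpow_zero) auto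
  then have "(\<lambda>n. x + (1/2::real)^n) \<longlonglongrightarrow> x + 0" by (intro tendsto_add tendsto_const)
  then show "(\<lambda>n. x + 1 / 2^n) \<longlonglongrightarrow> x" by (simp add: power_one_over)
qed simp

lemma rc_comp_measurable:
  fixes Z :: "real \<Rightarrow> 'a \<Rightarrow> 'b::metric_space"
  assumes meas: "\<And>t. 0 \<le> t \<Longrightarrow> Z t \<in> borel_measurable M"
  and rc: "\<And>\<omega> t. \<omega> \<in> space M \<Longrightarrow> 0 \<le> t \<Longrightarrow> ((\<lambda>s. Z s \<omega>) \<longlongrightarrow> Z t \<omega>) (at_right t)"
  and T: "T \<in> borel_measurable M" and T0: "\<And>\<omega>. \<omega> \<in> space M \<Longrightarrow> 0 \<le> T \<omega>"
  shows "(\<lambda>\<omega>. Z (T \<omega>) \<omega>) \<in> borel_measurable M"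
proof (rule borel_measurable_LIMSEQ_metric)
  fix n :: nat
  have g: "(\<lambda>\<omega>. nat \<lceil>T \<omega> * 2^n\<rceil>) \<in> measurable M (count_space UNIV)"
    using T by measurable
  have f: "\<And>k::nat. (\<lambda>\<omega>. Z (real k / 2^n) \<omega>) \<in> borel_measurable M"
    by (rule meas) simp
  show "(\<lambda>\<omega>. Z (real (nat \<lceil>T \<omega> * 2^n\<rceil>) / 2^n) \<omega>) \<in> borel_measurable M"
    using measurable_compose_countable[OF f g] .
next
  fix \<omega> assume \<omega>: "\<omega> \<in> space M"
  show "(\<lambda>n. Z (real (nat \<lceil>T \<omega> * 2^n\<rceil>) / 2^n) \<omega>) \<longlonglongrightarrow> Z (T \<omega>) \<omega>"
    using rc_seq[OF rc[OF \<omega> T0[OF \<omega>]] dyadic_bounds(1)[OF T0[OF \<omega>]] dyadic_lim[OF T0[OF \<omega>]]] .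
qed



lemma levyD1:
  assumes "levy M F X" shows "\<forall>t\<ge>0. X t \<in> borel_measurable (F t)"
  using assms unfolding levy_def by (rule conjunct1)

lemma levyD2:
  assumes "levy M F X" shows "\<forall>\<omega>\<in>space M. cadlag (\<lambda>t. X t \<omega>)"
  using assms unfolding levy_def by (rule conjunct1[OF conjunct2])

lemma filtrationD:
  assumes "filtration_on M F" shows "\<forall>t\<ge>0. subalgebra M (F t)"
  using assms unfolding filtration_on_def by (rule conjunct1)

lemma levy_meas:
  assumes F: "filtration_on M F" and L: "levy M F X" and t: "0 \<le> t"
  shows "X t \<in> borel_measurable M"
proof -
  have "X t \<in> borel_measurable (F t)" using levyD1[OF L] t by blast
  moreover have "subalgebra M (F t)" using filtrationD[OF F] t by blast
  ultimately show ?thesis by (rule measurable_from_subalg[rotated])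
qed

lemma levy_cadlag:
  assumes "levy M F X" "\<omega> \<in> space M" shows "cadlag (\<lambda>t. X t \<omega>)"
  using levyD2[OF assms(1)] assms(2) by (rule bspec)

lemma levy_rc:
  assumes L: "levy M F X" and w: "\<omega> \<in> space M" and t: "0 \<le> t"
  shows "((\<lambda>s. X s \<omega>) \<longlongrightarrow> X t \<omega>) (at_right t)"
proof -
  have "cadlag (\<lambda>t. X t \<omega>)" using levy_cadlag[OF L w] .
  then have "\<forall>t\<ge>0. ((\<lambda>s. X s \<omega>) \<longlongrightarrow> X t \<omega>) (at_right t)" unfolding cadlag_def by (rule conjunct1)
  from this[rule_format, OF t] show ?thesis .
qed

lemma shiftX_measurable:
  fixes X :: "real \<Rightarrow> 'a \<Rightarrow> real ^ 'd"
  assumes F: "filtration_on M F" and L: "levy M F X" and S: "S \<in> borel_measurable M"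
  shows "shiftX X S \<in> measurable M Dmeas"
  unfolding Dmeas_def
proof (rule measurable_measure_of)
  have inD0: "\<And>\<omega>. \<omega> \<in> space M \<Longrightarrow> shiftX X S \<omega> \<in> Dspace"
  proof -
    fix \<omega> assume "\<omega> \<in> space M"
    then have "cadlag (\<lambda>t. X t \<omega>)" by (rule levy_cadlag[OF L])
    then show "shiftX X S \<omega> \<in> Dspace" by (rule shiftX_in_D)
  qed
  then show "shiftX X S \<in> space M \<rightarrow> Dspace" by (rule Pi_I)
  fix y assume "y \<in> {{w \<in> Dspace. w t \<in> B} | t B. 0 \<le> t \<and> B \<in> sets (borel :: (real ^ 'd) measure)}"
  then obtain t and B :: "(real ^ 'd) set" where y: "y = {w \<in> Dspace. w t \<in> B}" "0 \<le> t" "B \<in> sets borel" by blast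
  let ?T = "\<lambda>\<omega>. enn2real (S \<omega>)"
  have T: "?T \<in> borel_measurable M" using S by measurable
  have T1: "(\<lambda>\<omega>. ?T \<omega> + t) \<in> borel_measurable M" using S by measurable
  have m1: "(\<lambda>\<omega>. X (?T \<omega> + t) \<omega>) \<in> borel_measurable M"
    by (rule rc_comp_measurable[of X M "\<lambda>\<omega>. ?T \<omega> + t", OF levy_meas[OF F L] levy_rc[OF L] T1])
       (simp_all add: y(2))
  have m2: "(\<lambda>\<omega>. X (?T \<omega>) \<omega>) \<in> borel_measurable M"
    by (rule rc_comp_measurable[of X M ?T, OF levy_meas[OF F L] levy_rc[OF L] T]) simp_all
  have "(\<lambda>\<omega>. X (?T \<omega> + t) \<omega> - X (?T \<omega>) \<omega>) \<in> borel_measurable M" using m1 m2 by measurable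
  then have "(\<lambda>\<omega>. X (?T \<omega> + t) \<omega> - X (?T \<omega>) \<omega>) -` B \<inter> space M \<in> sets M"
    using y(3) by (rule measurable_sets)
  moreover have "shiftX X S -` y \<inter> space M = (\<lambda>\<omega>. X (?T \<omega> + t) \<omega> - X (?T \<omega>) \<omega>) -` B \<inter> space M"
  proof -
    have inD: "\<And>\<omega>. \<omega> \<in> space M \<Longrightarrow> shiftX X S \<omega> \<in> Dspace" by (rule inD0)
    have ev: "\<And>\<omega>. shiftX X S \<omega> t = X (?T \<omega> + t) \<omega> - X (?T \<omega>) \<omega>" by (simp add: shiftX_def y(2))
    show ?thesis unfolding y(1) using inD ev by auto
  qed
  ultimately show "shiftX X S -` y \<inter> space M \<in> sets M" by simp
qed auto

lemma graph_measurable: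
  assumes F: "filtration_on M F" and T: "T \<in> borel_measurable M" and T0: "\<And>\<omega>. \<omega> \<in> space M \<Longrightarrow> 0 \<le> T \<omega>"
  shows "(\<lambda>\<omega>. (\<omega>, T \<omega>)) \<in> measurable M (optional M F)"
  unfolding optional_def
proof (rule measurable_measure_of)
  show "(\<lambda>\<omega>. (\<omega>, T \<omega>)) \<in> space M \<rightarrow> space M \<times> {0..}" using T0 by auto
  fix y assume "y \<in> {{p \<in> space M \<times> {0..}. Z (snd p) (fst p) \<in> B} | (Z :: real \<Rightarrow> 'a \<Rightarrow> real) B.
        (\<forall>t\<ge>0. Z t \<in> borel_measurable (F t)) \<and> (\<forall>\<omega>\<in>space M. cadlag (\<lambda>t. Z t \<omega>)) \<and>
        B \<in> sets (borel :: real measure)}"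
  then obtain Z :: "real \<Rightarrow> 'a \<Rightarrow> real" and B where y: "y = {p \<in> space M \<times> {0..}. Z (snd p) (fst p) \<in> B}"
    "\<forall>t\<ge>0. Z t \<in> borel_measurable (F t)" "\<forall>\<omega>\<in>space M. cadlag (\<lambda>t. Z t \<omega>)" "B \<in> sets (borel :: real measure)"
    by blast
  have "(\<lambda>\<omega>. Z (T \<omega>) \<omega>) \<in> borel_measurable M"
  proof (rule rc_comp_measurable[OF _ _ T T0])
    show "\<And>t. 0 \<le> t \<Longrightarrow> Z t \<in> borel_measurable M"
      using y(2) F unfolding filtration_on_def using measurable_from_subalg by blast
    show "\<And>\<omega> t. \<omega> \<in> space M \<Longrightarrow> 0 \<le> t \<Longrightarrow> ((\<lambda>s. Z s \<omega>) \<longlongrightarrow> Z t \<omega>) (at_right t)"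
      using y(3) unfolding cadlag_def by blast
  qed
  then have "(\<lambda>\<omega>. Z (T \<omega>) \<omega>) -` B \<inter> space M \<in> sets M" using y(4) by (rule measurable_sets)
  moreover have "(\<lambda>\<omega>. (\<omega>, T \<omega>)) -` y \<inter> space M = (\<lambda>\<omega>. Z (T \<omega>) \<omega>) -` B \<inter> space M"
    using y(1) T0 by auto
  ultimately show "(\<lambda>\<omega>. (\<omega>, T \<omega>)) -` y \<inter> space M \<in> sets M" by simp
qed auto

lemma fin_sets: "S \<in> borel_measurable M \<Longrightarrow> fin M S \<in> sets M"
  unfolding fin_def by measurable

lemma gen_events:
  assumes F: "filtration_on M F" and S: "S \<in> borel_measurable M"
  shows "gen M F S \<subseteq> sets M"
proof
  fix a assume "a \<in> gen M F S"
  then obtain Z and B :: "real set" where a: "a = {\<omega> \<in> fin M S. Z (\<omega>, enn2real (S \<omega>)) \<in> B}"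
    "Z \<in> borel_measurable (optional M F)" "B \<in> sets borel" unfolding gen_def by blast
  have "(\<lambda>\<omega>. (\<omega>, enn2real (S \<omega>))) \<in> measurable M (optional M F)"
    by (rule graph_measurable[OF F]) (use S in auto)
  then have "(\<lambda>\<omega>. Z (\<omega>, enn2real (S \<omega>))) \<in> borel_measurable M" using a(2) by (rule measurable_comp[unfolded comp_def])
  then have "(\<lambda>\<omega>. Z (\<omega>, enn2real (S \<omega>))) -` B \<inter> space M \<in> sets M" using a(3) by (rule measurable_sets)
  then have "(\<lambda>\<omega>. Z (\<omega>, enn2real (S \<omega>))) -` B \<inter> space M \<inter> fin M S \<in> sets M" using fin_sets[OF S] by blast
  moreover have "a = (\<lambda>\<omega>. Z (\<omega>, enn2real (S \<omega>))) -` B \<inter> space M \<inter> fin M S" using a(1) by (auto simp: fin_def)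
  ultimately show "a \<in> sets M" by simp
qed



lemma measurable_cond: "Y \<in> measurable M N \<Longrightarrow> Y \<in> measurable (cond_meas M A) N"
  unfolding cond_meas_def
  by (subst measurable_cong_sets[OF sets_uniform_measure refl]) (rule measurable_restrict_space1)

lemma distr_cond_eqI:
  assumes M: "prob_space M" and A: "A \<in> sets M" "measure M A > 0" and Y: "Y \<in> measurable M Dmeas"
    and N: "sets N = sets Dmeas"
    and eq: "\<And>\<Lambda>. \<Lambda> \<in> sets Dmeas \<Longrightarrow> emeasure N \<Lambda> = ennreal (measure M (Y -` \<Lambda> \<inter> A) / measure M A)"
  shows "distr (cond_meas M A) Dmeas Y = N"
proof (rule measure_eqI)
  show "sets (distr (cond_meas M A) Dmeas Y) = sets N" using N by simp
  interpret prob_space M by fact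
  fix \<Lambda> assume "\<Lambda> \<in> sets (distr (cond_meas M A) Dmeas Y)"
  then have L: "\<Lambda> \<in> sets Dmeas" by simp
  have sp: "space (cond_meas M A) = A" using A by (simp add: cond_space sets.sets_into_space)
  have Ys: "Y -` \<Lambda> \<inter> A \<in> sets M"
  proof -
    have "Y -` \<Lambda> \<inter> space M \<in> sets M" using Y L by (rule measurable_sets)
    then have "Y -` \<Lambda> \<inter> space M \<inter> A \<in> sets M" using A by blast
    moreover have "Y -` \<Lambda> \<inter> space M \<inter> A = Y -` \<Lambda> \<inter> A" using A sets.sets_into_space by blast
    ultimately show ?thesis by simp
  qed
  have "emeasure (distr (cond_meas M A) Dmeas Y) \<Lambda> = emeasure (cond_meas M A) (Y -` \<Lambda> \<inter> A)"
    using emeasure_distr[OF measurable_cond[OF Y] L] sp by simp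
  also have "\<dots> = emeasure M (Y -` \<Lambda> \<inter> A) / emeasure M A"
    using cond_emeasure[OF M A(1) Ys] by blast
  also have "\<dots> = ennreal (measure M (Y -` \<Lambda> \<inter> A) / measure M A)"
    using A by (simp add: emeasure_eq_measure divide_ennreal)
  finally show "emeasure (distr (cond_meas M A) Dmeas Y) \<Lambda> = emeasure N \<Lambda>" using eq[OF L] by simp
qed

lemma measure_distr_cond:
  assumes M: "prob_space M" and A: "A \<in> sets M" "measure M A > 0" and Y: "Y \<in> measurable M Dmeas"
    and L: "\<Lambda> \<in> sets Dmeas"
  shows "measure (distr (cond_meas M A) Dmeas Y) \<Lambda> = measure M (Y -` \<Lambda> \<inter> A) / measure M A"
proof -
  interpret prob_space M by fact
  have sp: "space (cond_meas M A) = A" using A by (simp add: cond_space sets.sets_into_space)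
  have Ys: "Y -` \<Lambda> \<inter> A \<in> sets M"
  proof -
    have "Y -` \<Lambda> \<inter> space M \<in> sets M" using Y L by (rule measurable_sets)
    then have "Y -` \<Lambda> \<inter> space M \<inter> A \<in> sets M" using A by blast
    moreover have "Y -` \<Lambda> \<inter> space M \<inter> A = Y -` \<Lambda> \<inter> A" using A sets.sets_into_space by blast
    ultimately show ?thesis by simp
  qed
  have "measure (distr (cond_meas M A) Dmeas Y) \<Lambda> = measure (cond_meas M A) (Y -` \<Lambda> \<inter> A)"
    using measure_distr[OF measurable_cond[OF Y] L] sp by simp
  also have "\<dots> = measure M (Y -` \<Lambda> \<inter> A) / measure M A"
    using cond_measure[OF M A Ys] by blast
  finally show ?thesis .
qed

lemma prob_space_distr_cond:
  assumes M: "prob_space M" and A: "A \<in> sets M" "measure M A > 0" and Y: "Y \<in> measurable M Dmeas"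
  shows "prob_space (distr (cond_meas M A) Dmeas Y)"
  using prob_space.prob_space_distr[OF cond_prob[OF M A] measurable_cond[OF Y]] .

lemma emeasure_uniform_prob:
  assumes D: "prob_space D" and G: "\<Gamma> \<in> sets D" and L: "\<Lambda> \<in> sets D" and pos: "measure D \<Gamma> > 0"
  shows "emeasure (uniform_measure D \<Gamma>) \<Lambda> = ennreal (measure D (\<Gamma> \<inter> \<Lambda>) / measure D \<Gamma>)"
proof -
  interpret prob_space D by fact
  show ?thesis using G L pos by (simp add: emeasure_eq_measure divide_ennreal)
qed

lemma Y_pre_sets:
  assumes Y: "Y \<in> measurable M Dmeas" and A: "A \<in> sets M" and L: "\<Lambda> \<in> sets Dmeas"
  shows "Y -` \<Lambda> \<inter> A \<in> sets M"
proof -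
  have "Y -` \<Lambda> \<inter> space M \<in> sets M" using Y L by (rule measurable_sets)
  then have "Y -` \<Lambda> \<inter> space M \<inter> A \<in> sets M" using A by blast
  moreover have "Y -` \<Lambda> \<inter> space M \<inter> A = Y -` \<Lambda> \<inter> A" using A sets.sets_into_space by blast
  ultimately show ?thesis by simp
qed

lemma indep_from_gen:
  assumes M: "prob_space M" and F: "filtration_on M F" and L: "levy M F X"
    and S: "S \<in> borel_measurable M" and pos: "measure M (fin M S) > 0"
    and eq: "\<And>a \<Lambda>. a \<in> gen M F S \<Longrightarrow> \<Lambda> \<in> sets Dmeas \<Longrightarrow>
       measure M (a \<inter> (shiftX X S -` \<Lambda> \<inter> fin M S)) * measure M (fin M S) =
       measure M a * measure M (shiftX X S -` \<Lambda> \<inter> fin M S)"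
  shows "indep_rv (cond_meas M (fin M S)) (sets (Fprime M F S)) (shiftX X S) Dmeas"
proof -
  have fS: "fin M S \<in> sets M" using S by (rule fin_sets)
  have Y: "shiftX X S \<in> measurable M Dmeas" using shiftX_measurable[OF F L S] .
  have "indep_rv (cond_meas M (fin M S)) (gen M F S) (shiftX X S) Dmeas"
    unfolding indep_rv_cond_iff[OF M fS pos]
    using gen_events[OF F S] gen_subset eq Y_pre_sets[OF Y fS] by blast
  then have "indep_rv (cond_meas M (fin M S)) (sigma_sets (space (cond_meas M (fin M S))) (gen M F S)) (shiftX X S) Dmeas"
    by (intro indep_rv_sigma cond_prob[OF M fS pos] gen_Int_stable)
  moreover have "space (cond_meas M (fin M S)) = fin M S" using fS by (simp add: cond_space sets.sets_into_space)
  ultimately show ?thesis by (simp add: sets_Fprime)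
qed

lemma indep_to_gen:
  assumes M: "prob_space M" and S: "S \<in> borel_measurable M" and pos: "measure M (fin M S) > 0"
    and ind: "indep_rv (cond_meas M (fin M S)) (sets (Fprime M F S)) (shiftX X S) Dmeas"
    and a: "a \<in> gen M F S" and L: "\<Lambda> \<in> sets Dmeas"
  shows "measure M (a \<inter> (shiftX X S -` \<Lambda> \<inter> fin M S)) * measure M (fin M S) =
       measure M a * measure M (shiftX X S -` \<Lambda> \<inter> fin M S)"
  using ind unfolding indep_rv_cond_iff[OF M fin_sets[OF S] pos] using a L gen_sub_Fprime by blast

lemma fin_in_gen: "fin M S \<in> gen M F S"
  unfolding gen_def by (rule CollectI, rule exI[of _ "\<lambda>_. 0::real"], rule exI[of _ UNIV]) auto

lemma fin_graph: "\<omega> \<in> fin M S \<Longrightarrow> (\<omega>, enn2real (S \<omega>)) \<in> graph M S"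
  unfolding fin_def graph_def by auto

lemma graph_fin: "(\<omega>, t) \<in> graph M S \<Longrightarrow> \<omega> \<in> fin M S \<and> S \<omega> = ennreal t \<and> enn2real (S \<omega>) = t"
  unfolding fin_def graph_def by auto

lemma shiftX_cong:
  assumes "S \<omega> = T \<omega>" shows "shiftX X S \<omega> = shiftX X T \<omega>"
  unfolding shiftX_def assms ..



lemma graph_sub_fin:
  assumes G: "graph M P = A \<inter> graph M R"
  shows "fin M P = {\<omega> \<in> fin M R. (\<omega>, enn2real (R \<omega>)) \<in> A}"
    and "\<And>\<omega>. \<omega> \<in> fin M P \<Longrightarrow> P \<omega> = R \<omega>"
proof -
  have key: "\<And>\<omega>. \<omega> \<in> fin M P \<Longrightarrow> P \<omega> = R \<omega> \<and> \<omega> \<in> fin M R \<and> (\<omega>, enn2real (R \<omega>)) \<in> A"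
  proof -
    fix \<omega> assume w: "\<omega> \<in> fin M P"
    define t where "t = enn2real (P \<omega>)"
    have g: "(\<omega>, t) \<in> graph M P" unfolding t_def using w by (rule fin_graph)
    then have gP: "P \<omega> = ennreal t" using graph_fin by metis
    from g have gA: "(\<omega>, t) \<in> A" and gR: "(\<omega>, t) \<in> graph M R" unfolding G by simp_all
    have gRR: "\<omega> \<in> fin M R \<and> R \<omega> = ennreal t \<and> enn2real (R \<omega>) = t" by (rule graph_fin[OF gR])
    then show "P \<omega> = R \<omega> \<and> \<omega> \<in> fin M R \<and> (\<omega>, enn2real (R \<omega>)) \<in> A" using gP gA by (elim conjE) simp
  qed
  then show "\<And>\<omega>. \<omega> \<in> fin M P \<Longrightarrow> P \<omega> = R \<omega>" by simp
  show "fin M P = {\<omega> \<in> fin M R. (\<omega>, enn2real (R \<omega>)) \<in> A}"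
  proof (intro set_eqI iffI)
    fix \<omega> assume "\<omega> \<in> fin M P"
    then show "\<omega> \<in> {\<omega> \<in> fin M R. (\<omega>, enn2real (R \<omega>)) \<in> A}" using key by simp
  next
    fix \<omega> assume "\<omega> \<in> {\<omega> \<in> fin M R. (\<omega>, enn2real (R \<omega>)) \<in> A}"
    then have a: "\<omega> \<in> fin M R" "(\<omega>, enn2real (R \<omega>)) \<in> A" by simp_all
    have "(\<omega>, enn2real (R \<omega>)) \<in> graph M R" using a(1) by (rule fin_graph)
    then have "(\<omega>, enn2real (R \<omega>)) \<in> graph M P" unfolding G using a(2) by simp
    then show "\<omega> \<in> fin M P" using graph_fin by metis
  qed
qed

lemma gen_restrict:
  assumes a: "a \<in> gen M F P" and eqP: "\<And>\<omega>. \<omega> \<in> fin M P \<Longrightarrow> P \<omega> = R \<omega>" and sub: "fin M P \<subseteq> fin M R"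
  shows "\<exists>b \<in> gen M F R. a = b \<inter> fin M P"
proof -
  obtain Z and B :: "real set" where a: "a = {\<omega> \<in> fin M P. Z (\<omega>, enn2real (P \<omega>)) \<in> B}"
    "Z \<in> borel_measurable (optional M F)" "B \<in> sets borel" using a unfolding gen_def by blast
  let ?b = "{\<omega> \<in> fin M R. Z (\<omega>, enn2real (R \<omega>)) \<in> B}"
  have "?b \<in> gen M F R" unfolding gen_def using a(2,3) by blast
  moreover have "a = ?b \<inter> fin M P"
  proof (intro set_eqI iffI)
    fix \<omega> assume w: "\<omega> \<in> a"
    then have w1: "\<omega> \<in> fin M P" "Z (\<omega>, enn2real (P \<omega>)) \<in> B" unfolding a(1) by simp_all
    then show "\<omega> \<in> ?b \<inter> fin M P" using eqP[OF w1(1)] sub by auto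
  next
    fix \<omega> assume w: "\<omega> \<in> ?b \<inter> fin M P"
    then have w1: "\<omega> \<in> fin M P" "Z (\<omega>, enn2real (R \<omega>)) \<in> B" by simp_all
    then show "\<omega> \<in> a" unfolding a(1) using eqP[OF w1(1)] by simp
  qed
  ultimately show ?thesis by blast
qed

lemma part_Ia:
  fixes X :: "real \<Rightarrow> 'a \<Rightarrow> real ^ 'd"
  assumes M: "prob_space M" and F: "filtration_on M F" and L: "levy M F X"
    and R: "R \<in> borel_measurable M" and pR: "measure M (fin M R) > 0"
    and indR: "indep_rv (cond_meas M (fin M R)) (sets (Fprime M F R)) (shiftX X R) Dmeas"
    and P: "P \<in> borel_measurable M" and pP: "measure M (fin M P) > 0"
    and A: "A \<in> sets (optional M F)" and G: "graph M P = A \<inter> graph M R"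
  shows "indep_rv (cond_meas M (fin M P)) (sets (Fprime M F P)) (shiftX X P) Dmeas \<and>
         distr (cond_meas M (fin M P)) Dmeas (shiftX X P) = distr (cond_meas M (fin M R)) Dmeas (shiftX X R)"
proof -
  note finP = graph_sub_fin(1)[OF G] and eqP = graph_sub_fin(2)[OF G]
  have sub: "fin M P \<subseteq> fin M R" using finP by blast
  have fR: "fin M R \<in> sets M" and fP: "fin M P \<in> sets M" using R P by (simp_all add: fin_sets)
  have YR: "shiftX X R \<in> measurable M Dmeas" using shiftX_measurable[OF F L R] .
  have YP: "shiftX X P \<in> measurable M Dmeas" using shiftX_measurable[OF F L P] .
  have pre: "\<And>\<Lambda> :: (real \<Rightarrow> real ^ 'd) set. shiftX X P -` \<Lambda> \<inter> fin M P = fin M P \<inter> (shiftX X R -` \<Lambda> \<inter> fin M R)"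
    using eqP sub shiftX_cong[of P _ R X] by auto
  have "(\<lambda>p. indicator A p :: real) \<in> borel_measurable (optional M F)" using A by measurable
  then have finPgen: "fin M P \<in> gen M F R" unfolding finP gen_def
    by (intro CollectI exI[of _ "\<lambda>p. indicator A p :: real"] exI[of _ "{1::real}"]) (auto simp: indicator_def)
  have key: "\<And>b (\<Lambda> :: (real \<Rightarrow> real ^ 'd) set). b \<in> gen M F R \<Longrightarrow> \<Lambda> \<in> sets Dmeas \<Longrightarrow>
      measure M (b \<inter> (shiftX X R -` \<Lambda> \<inter> fin M R)) = measure M b * measure M (shiftX X R -` \<Lambda> \<inter> fin M R) / measure M (fin M R)"
    using indep_to_gen[OF M R pR indR] pR by (simp add: field_simps)
  have keyP: "\<And>\<Lambda> :: (real \<Rightarrow> real ^ 'd) set. \<Lambda> \<in> sets Dmeas \<Longrightarrow> measure M (shiftX X P -` \<Lambda> \<inter> fin M P) =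
      measure M (fin M P) * measure M (shiftX X R -` \<Lambda> \<inter> fin M R) / measure M (fin M R)"
    using key[OF finPgen] pre by simp
  have "indep_rv (cond_meas M (fin M P)) (sets (Fprime M F P)) (shiftX X P) Dmeas"
  proof (rule indep_from_gen[OF M F L P pP])
    fix a and \<Lambda> :: "(real \<Rightarrow> real ^ 'd) set" assume a: "a \<in> gen M F P" and Lm: "\<Lambda> \<in> sets Dmeas"
    obtain b where b: "b \<in> gen M F R" "a = b \<inter> fin M P" using gen_restrict[OF a eqP sub] by blast
    have ab: "a \<in> gen M F R" using b finPgen gen_Int_stable[of M F R] unfolding Int_stable_def by blast
    have "a \<inter> (shiftX X P -` \<Lambda> \<inter> fin M P) = a \<inter> (shiftX X R -` \<Lambda> \<inter> fin M R)"
      using pre b(2) by auto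
    then show "measure M (a \<inter> (shiftX X P -` \<Lambda> \<inter> fin M P)) * measure M (fin M P) =
       measure M a * measure M (shiftX X P -` \<Lambda> \<inter> fin M P)"
      using key[OF ab Lm] keyP[OF Lm] by simp
  qed
  moreover have "distr (cond_meas M (fin M P)) Dmeas (shiftX X P) = distr (cond_meas M (fin M R)) Dmeas (shiftX X R)"
  proof (rule distr_cond_eqI[OF M fP pP YP])
    show "sets (distr (cond_meas M (fin M R)) Dmeas (shiftX X R)) = sets Dmeas" by simp
    fix \<Lambda> :: "(real \<Rightarrow> real ^ 'd) set" assume Lm: "\<Lambda> \<in> sets Dmeas"
    interpret D: prob_space "distr (cond_meas M (fin M R)) Dmeas (shiftX X R)"
      by (rule prob_space_distr_cond[OF M fR pR YR])
    have "emeasure (distr (cond_meas M (fin M R)) Dmeas (shiftX X R)) \<Lambda> =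
        ennreal (measure M (shiftX X R -` \<Lambda> \<inter> fin M R) / measure M (fin M R))"
      using D.emeasure_eq_measure measure_distr_cond[OF M fR pR YR Lm] by simp
    also have "measure M (shiftX X R -` \<Lambda> \<inter> fin M R) / measure M (fin M R) =
        measure M (shiftX X P -` \<Lambda> \<inter> fin M P) / measure M (fin M P)"
      using keyP[OF Lm] pP by simp
    finally show "emeasure (distr (cond_meas M (fin M R)) Dmeas (shiftX X R)) \<Lambda> =
        ennreal (measure M (shiftX X P -` \<Lambda> \<inter> fin M P) / measure M (fin M P))" .
  qed
  ultimately show ?thesis by blast
qed



lemma part_Ib:
  fixes X :: "real \<Rightarrow> 'a \<Rightarrow> real ^ 'd"
  assumes M: "prob_space M" and F: "filtration_on M F" and L: "levy M F X"
    and R: "R \<in> borel_measurable M" and pR: "measure M (fin M R) > 0"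
    and indR: "indep_rv (cond_meas M (fin M R)) (sets (Fprime M F R)) (shiftX X R) Dmeas"
    and P: "P \<in> borel_measurable M" and pP: "measure M (fin M P) > 0"
    and Gm: "\<Gamma> \<in> sets Dmeas" and G: "graph M P = (blackX X -` \<Gamma> \<inter> (space M \<times> {0..})) \<inter> graph M R"
  shows "indep_rv (cond_meas M (fin M P)) (sets (Fprime M F P)) (shiftX X P) Dmeas \<and>
         distr (cond_meas M (fin M P)) Dmeas (shiftX X P) = uniform_measure (distr (cond_meas M (fin M R)) Dmeas (shiftX X R)) \<Gamma>"
proof -
  note finP0 = graph_sub_fin(1)[OF G] and eqP = graph_sub_fin(2)[OF G]
  have finP: "fin M P = shiftX X R -` \<Gamma> \<inter> fin M R"
  proof (intro set_eqI iffI)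
    fix \<omega> assume "\<omega> \<in> fin M P"
    then have w: "\<omega> \<in> fin M R" "(\<omega>, enn2real (R \<omega>)) \<in> blackX X -` \<Gamma> \<inter> (space M \<times> {0..})"
      unfolding finP0 by simp_all
    have "R \<omega> = ennreal (enn2real (R \<omega>))" using w(1) unfolding fin_def by simp
    then have "blackX X (\<omega>, enn2real (R \<omega>)) = shiftX X R \<omega>" by (rule blackX_shiftX) simp
    then show "\<omega> \<in> shiftX X R -` \<Gamma> \<inter> fin M R" using w by simp
  next
    fix \<omega> assume w: "\<omega> \<in> shiftX X R -` \<Gamma> \<inter> fin M R"
    have "R \<omega> = ennreal (enn2real (R \<omega>))" using w unfolding fin_def by simp
    then have "blackX X (\<omega>, enn2real (R \<omega>)) = shiftX X R \<omega>" by (rule blackX_shiftX) simp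
    moreover have "\<omega> \<in> space M" using w unfolding fin_def by simp
    ultimately show "\<omega> \<in> fin M P" unfolding finP0 using w by simp
  qed
  have sub: "fin M P \<subseteq> fin M R" using finP by blast
  have fR: "fin M R \<in> sets M" and fP: "fin M P \<in> sets M" using R P by (simp_all add: fin_sets)
  have YR: "shiftX X R \<in> measurable M Dmeas" using shiftX_measurable[OF F L R] .
  have YP: "shiftX X P \<in> measurable M Dmeas" using shiftX_measurable[OF F L P] .
  have pre: "\<And>\<Lambda> :: (real \<Rightarrow> real ^ 'd) set. shiftX X P -` \<Lambda> \<inter> fin M P = shiftX X R -` (\<Gamma> \<inter> \<Lambda>) \<inter> fin M R"
  proof (intro set_eqI iffI)
    fix \<Lambda> :: "(real \<Rightarrow> real ^ 'd) set" and \<omega>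
    assume w: "\<omega> \<in> shiftX X P -` \<Lambda> \<inter> fin M P"
    then have "shiftX X P \<omega> = shiftX X R \<omega>" using eqP by (intro shiftX_cong) simp
    then show "\<omega> \<in> shiftX X R -` (\<Gamma> \<inter> \<Lambda>) \<inter> fin M R" using w unfolding finP by simp
  next
    fix \<Lambda> :: "(real \<Rightarrow> real ^ 'd) set" and \<omega>
    assume w: "\<omega> \<in> shiftX X R -` (\<Gamma> \<inter> \<Lambda>) \<inter> fin M R"
    then have w2: "\<omega> \<in> fin M P" unfolding finP by simp
    then have "shiftX X P \<omega> = shiftX X R \<omega>" using eqP by (intro shiftX_cong) simp
    then show "\<omega> \<in> shiftX X P -` \<Lambda> \<inter> fin M P" using w w2 by simp
  qed
  have key: "\<And>b (\<Lambda> :: (real \<Rightarrow> real ^ 'd) set). b \<in> gen M F R \<Longrightarrow> \<Lambda> \<in> sets Dmeas \<Longrightarrow>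
      measure M (b \<inter> (shiftX X R -` \<Lambda> \<inter> fin M R)) = measure M b * measure M (shiftX X R -` \<Lambda> \<inter> fin M R) / measure M (fin M R)"
    using indep_to_gen[OF M R pR indR] pR by (simp add: field_simps)
  have indP: "indep_rv (cond_meas M (fin M P)) (sets (Fprime M F P)) (shiftX X P) Dmeas"
  proof (rule indep_from_gen[OF M F L P pP])
    fix a and \<Lambda> :: "(real \<Rightarrow> real ^ 'd) set" assume a: "a \<in> gen M F P" and Lm: "\<Lambda> \<in> sets Dmeas"
    obtain b where b: "b \<in> gen M F R" "a = b \<inter> fin M P" using gen_restrict[OF a eqP sub] by blast
    have GL: "\<Gamma> \<inter> \<Lambda> \<in> sets Dmeas" using Gm Lm by (rule sets.Int)
    have e1: "a \<inter> (shiftX X P -` \<Lambda> \<inter> fin M P) = b \<inter> (shiftX X R -` (\<Gamma> \<inter> \<Lambda>) \<inter> fin M R)"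
      unfolding b(2) pre[of \<Lambda>] unfolding finP by blast
    have e2: "a = b \<inter> (shiftX X R -` \<Gamma> \<inter> fin M R)" unfolding b(2) finP ..
    show "measure M (a \<inter> (shiftX X P -` \<Lambda> \<inter> fin M P)) * measure M (fin M P) =
       measure M a * measure M (shiftX X P -` \<Lambda> \<inter> fin M P)"
    proof -
      have m1: "measure M (a \<inter> (shiftX X P -` \<Lambda> \<inter> fin M P)) =
          measure M b * measure M (shiftX X R -` (\<Gamma> \<inter> \<Lambda>) \<inter> fin M R) / measure M (fin M R)"
        unfolding e1 by (rule key[OF b(1) GL])
      have m2: "measure M a = measure M b * measure M (shiftX X R -` \<Gamma> \<inter> fin M R) / measure M (fin M R)"
        unfolding e2 by (rule key[OF b(1) Gm])
      have m3: "measure M (shiftX X P -` \<Lambda> \<inter> fin M P) = measure M (shiftX X R -` (\<Gamma> \<inter> \<Lambda>) \<inter> fin M R)"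
        unfolding pre[of \<Lambda>] ..
      have m4: "measure M (fin M P) = measure M (shiftX X R -` \<Gamma> \<inter> fin M R)" unfolding finP ..
      show ?thesis unfolding m1 m2 m3 m4 by simp
    qed
  qed
  interpret D: prob_space "distr (cond_meas M (fin M R)) Dmeas (shiftX X R)"
    by (rule prob_space_distr_cond[OF M fR pR YR])
  have mD: "\<And>\<Lambda>. \<Lambda> \<in> sets Dmeas \<Longrightarrow> measure (distr (cond_meas M (fin M R)) Dmeas (shiftX X R)) \<Lambda> =
      measure M (shiftX X R -` \<Lambda> \<inter> fin M R) / measure M (fin M R)"
    by (rule measure_distr_cond[OF M fR pR YR])
  have posG: "measure (distr (cond_meas M (fin M R)) Dmeas (shiftX X R)) \<Gamma> > 0"
    unfolding mD[OF Gm] finP[symmetric] using pP pR by simp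
  have "distr (cond_meas M (fin M P)) Dmeas (shiftX X P) = uniform_measure (distr (cond_meas M (fin M R)) Dmeas (shiftX X R)) \<Gamma>"
  proof (rule distr_cond_eqI[OF M fP pP YP])
    show "sets (uniform_measure (distr (cond_meas M (fin M R)) Dmeas (shiftX X R)) \<Gamma>) = sets Dmeas" by simp
    fix \<Lambda> :: "(real \<Rightarrow> real ^ 'd) set" assume Lm: "\<Lambda> \<in> sets Dmeas"
    have GL: "\<Gamma> \<inter> \<Lambda> \<in> sets Dmeas" using Gm Lm by (rule sets.Int)
    have "emeasure (uniform_measure (distr (cond_meas M (fin M R)) Dmeas (shiftX X R)) \<Gamma>) \<Lambda> =
      ennreal (measure (distr (cond_meas M (fin M R)) Dmeas (shiftX X R)) (\<Gamma> \<inter> \<Lambda>) /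
               measure (distr (cond_meas M (fin M R)) Dmeas (shiftX X R)) \<Gamma>)"
      by (rule emeasure_uniform_prob) (use Gm Lm posG D.prob_space_axioms in simp_all)
    also have "measure (distr (cond_meas M (fin M R)) Dmeas (shiftX X R)) (\<Gamma> \<inter> \<Lambda>) /
               measure (distr (cond_meas M (fin M R)) Dmeas (shiftX X R)) \<Gamma> =
       measure M (shiftX X P -` \<Lambda> \<inter> fin M P) / measure M (fin M P)"
    proof -
      have m3: "measure M (shiftX X P -` \<Lambda> \<inter> fin M P) = measure M (shiftX X R -` (\<Gamma> \<inter> \<Lambda>) \<inter> fin M R)"
        unfolding pre[of \<Lambda>] ..
      have m4: "measure M (fin M P) = measure M (shiftX X R -` \<Gamma> \<inter> fin M R)" unfolding finP ..
      show ?thesis unfolding mD[OF GL] mD[OF Gm] m3 m4 using pR pP m4 by (simp add: field_simps)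
    qed
    finally show "emeasure (uniform_measure (distr (cond_meas M (fin M R)) Dmeas (shiftX X R)) \<Gamma>) \<Lambda> =
        ennreal (measure M (shiftX X P -` \<Lambda> \<inter> fin M P) / measure M (fin M P))" .
  qed
  with indP show ?thesis by blast
qed



lemma piece:
  fixes X :: "real \<Rightarrow> 'a \<Rightarrow> real ^ 'd"
  assumes M: "prob_space M" and F: "filtration_on M F" and L: "levy M F X"
    and R: "R \<in> borel_measurable M" and R1: "R1 \<in> borel_measurable M" and p1: "measure M (fin M R1) > 0"
    and ind1: "indep_rv (cond_meas M (fin M R1)) (sets (Fprime M F R1)) (shiftX X R1) Dmeas"
    and E: "E \<in> sets M" and sub: "E \<subseteq> fin M R"
    and ae: "AE \<omega> in M. (\<omega> \<in> fin M R1 \<longleftrightarrow> \<omega> \<in> E) \<and> (\<omega> \<in> fin M R1 \<longrightarrow> R1 \<omega> = R \<omega>)"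
    and law: "\<And>\<Lambda>. \<Lambda> \<in> sets Dmeas \<Longrightarrow> measure M (shiftX X R1 -` \<Lambda> \<inter> fin M R1) = measure M (fin M R1) * c \<Lambda>"
    and a: "a \<in> gen M F R" and Lm: "\<Lambda> \<in> sets Dmeas"
  shows "measure M (a \<inter> (shiftX X R -` \<Lambda> \<inter> fin M R) \<inter> E) = measure M (a \<inter> E) * c \<Lambda>"
proof -
  obtain Z and B :: "real set" where a: "a = {\<omega> \<in> fin M R. Z (\<omega>, enn2real (R \<omega>)) \<in> B}"
    "Z \<in> borel_measurable (optional M F)" "B \<in> sets borel" using a unfolding gen_def by blast
  define a1 where "a1 = {\<omega> \<in> fin M R1. Z (\<omega>, enn2real (R1 \<omega>)) \<in> B}"
  have a1g: "a1 \<in> gen M F R1" unfolding gen_def a1_def using a(2,3) by blast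
  have aM: "a \<in> sets M" using gen_events[OF F R] \<open>a \<in> gen M F R\<close> by blast
  have a1M: "a1 \<in> sets M" using gen_events[OF F R1] a1g by blast
  have fR: "fin M R \<in> sets M" and fR1: "fin M R1 \<in> sets M" using R R1 by (simp_all add: fin_sets)
  have YR: "shiftX X R \<in> measurable M Dmeas" using shiftX_measurable[OF F L R] .
  have YR1: "shiftX X R1 \<in> measurable M Dmeas" using shiftX_measurable[OF F L R1] .
  have s1: "shiftX X R -` \<Lambda> \<inter> fin M R \<in> sets M" by (rule Y_pre_sets[OF YR fR Lm])
  have s2: "shiftX X R1 -` \<Lambda> \<inter> fin M R1 \<in> sets M" by (rule Y_pre_sets[OF YR1 fR1 Lm])
  have ae1: "AE \<omega> in M. \<omega> \<in> a1 \<longleftrightarrow> \<omega> \<in> a \<inter> E"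
    using ae
  proof eventually_elim
    case (elim \<omega>)
    show ?case
    proof (cases "\<omega> \<in> fin M R1")
      case True
      then have "\<omega> \<in> E" "R1 \<omega> = R \<omega>" using elim by simp_all
      moreover have "\<omega> \<in> fin M R" using \<open>\<omega> \<in> E\<close> sub by blast
      ultimately show ?thesis using True unfolding a1_def a(1) by simp
    next
      case False
      then have "\<omega> \<notin> E" using elim by simp
      then show ?thesis using False unfolding a1_def by simp
    qed
  qed
  have ae2: "AE \<omega> in M. \<omega> \<in> a1 \<inter> (shiftX X R1 -` \<Lambda> \<inter> fin M R1) \<longleftrightarrow> \<omega> \<in> a \<inter> (shiftX X R -` \<Lambda> \<inter> fin M R) \<inter> E"
    using ae ae1
  proof eventually_elim
    case (elim \<omega>)
    show ?case
    proof (cases "\<omega> \<in> fin M R1")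
      case True
      then have "R1 \<omega> = R \<omega>" using elim by simp
      then have "shiftX X R1 \<omega> = shiftX X R \<omega>" by (rule shiftX_cong)
      moreover have "\<omega> \<in> fin M R" using True elim sub by blast
      ultimately show ?thesis using True elim by simp
    next
      case False
      then show ?thesis using elim by simp
    qed
  qed
  have m1: "measure M a1 = measure M (a \<inter> E)"
    by (rule measure_eq_AE[OF ae1 a1M]) (use aM E in blast)
  have m2: "measure M (a1 \<inter> (shiftX X R1 -` \<Lambda> \<inter> fin M R1)) = measure M (a \<inter> (shiftX X R -` \<Lambda> \<inter> fin M R) \<inter> E)"
    by (rule measure_eq_AE[OF ae2]) (use a1M s2 aM s1 E in blast)+
  have "measure M (a1 \<inter> (shiftX X R1 -` \<Lambda> \<inter> fin M R1)) * measure M (fin M R1) =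
       measure M a1 * measure M (shiftX X R1 -` \<Lambda> \<inter> fin M R1)"
    by (rule indep_to_gen[OF M R1 p1 ind1 a1g Lm])
  then have "measure M (a1 \<inter> (shiftX X R1 -` \<Lambda> \<inter> fin M R1)) * measure M (fin M R1) =
       (measure M a1 * c \<Lambda>) * measure M (fin M R1)"
    unfolding law[OF Lm] by simp
  then have "measure M (a1 \<inter> (shiftX X R1 -` \<Lambda> \<inter> fin M R1)) = measure M a1 * c \<Lambda>"
    using p1 by simp
  then show ?thesis unfolding m1 m2 .
qed

lemma finish:
  fixes X :: "real \<Rightarrow> 'a \<Rightarrow> real ^ 'd"
  assumes M: "prob_space M" and F: "filtration_on M F" and L: "levy M F X"
    and R: "R \<in> borel_measurable M" and pR: "measure M (fin M R) > 0"
    and key: "\<And>a \<Lambda>. a \<in> gen M F R \<Longrightarrow> \<Lambda> \<in> sets Dmeas \<Longrightarrow>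
       measure M (a \<inter> (shiftX X R -` \<Lambda> \<inter> fin M R)) = measure M a * c \<Lambda>"
  shows "indep_rv (cond_meas M (fin M R)) (sets (Fprime M F R)) (shiftX X R) Dmeas"
    and "\<And>\<Lambda>. \<Lambda> \<in> sets Dmeas \<Longrightarrow> measure M (shiftX X R -` \<Lambda> \<inter> fin M R) = measure M (fin M R) * c \<Lambda>"
proof -
  show law: "\<And>\<Lambda>. \<Lambda> \<in> sets Dmeas \<Longrightarrow> measure M (shiftX X R -` \<Lambda> \<inter> fin M R) = measure M (fin M R) * c \<Lambda>"
  proof -
    fix \<Lambda> :: "(real \<Rightarrow> real ^ 'd) set" assume Lm: "\<Lambda> \<in> sets Dmeas"
    have "fin M R \<inter> (shiftX X R -` \<Lambda> \<inter> fin M R) = shiftX X R -` \<Lambda> \<inter> fin M R" by blast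
    then show "measure M (shiftX X R -` \<Lambda> \<inter> fin M R) = measure M (fin M R) * c \<Lambda>"
      using key[OF fin_in_gen Lm] by simp
  qed
  show "indep_rv (cond_meas M (fin M R)) (sets (Fprime M F R)) (shiftX X R) Dmeas"
  proof (rule indep_from_gen[OF M F L R pR])
    fix a and \<Lambda> :: "(real \<Rightarrow> real ^ 'd) set" assume a: "a \<in> gen M F R" and Lm: "\<Lambda> \<in> sets Dmeas"
    show "measure M (a \<inter> (shiftX X R -` \<Lambda> \<inter> fin M R)) * measure M (fin M R) =
       measure M a * measure M (shiftX X R -` \<Lambda> \<inter> fin M R)"
      unfolding key[OF a Lm] law[OF Lm] by simp
  qed
qed

lemma split_two:
  assumes M: "prob_space M" and E1: "E1 \<in> sets M" and E2: "E2 \<in> sets M" and U: "E1 \<union> E2 = S"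
    and D: "E1 \<inter> E2 = {}" and T: "T \<in> sets M" and sub: "T \<subseteq> S"
  shows "measure M T = measure M (T \<inter> E1) + measure M (T \<inter> E2)"
proof -
  interpret prob_space M by fact
  have "T = (T \<inter> E1) \<union> (T \<inter> E2)" using U sub by blast
  then have "measure M T = measure M ((T \<inter> E1) \<union> (T \<inter> E2))" by simp
  also have "\<dots> = measure M (T \<inter> E1) + measure M (T \<inter> E2)"
    by (rule finite_measure_Union) (use T E1 E2 D in blast)+
  finally show ?thesis .
qed



lemma blackX_fin: "\<omega> \<in> fin M R \<Longrightarrow> blackX X (\<omega>, enn2real (R \<omega>)) = shiftX X R \<omega>"
  by (rule blackX_shiftX) (auto simp: fin_def)

lemma measure_uniform_prob:
  assumes D: "prob_space D" and G: "\<Gamma> \<in> sets D" and L: "\<Lambda> \<in> sets D" and pos: "measure D \<Gamma> > 0"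
  shows "measure (uniform_measure D \<Gamma>) \<Lambda> = measure D (\<Gamma> \<inter> \<Lambda>) / measure D \<Gamma>"
  unfolding measure_def[of "uniform_measure D \<Gamma>"] emeasure_uniform_prob[OF assms]
  using pos by simp

lemma part_IIii:
  fixes X :: "real \<Rightarrow> 'a \<Rightarrow> real ^ 'd" and Mu :: "(real \<Rightarrow> real ^ 'd) measure"
  assumes M: "prob_space M" and F: "filtration_on M F" and L: "levy M F X"
    and R: "R \<in> borel_measurable M" and pR: "measure M (fin M R) > 0"
    and R1: "R1 \<in> borel_measurable M" and R2: "R2 \<in> borel_measurable M"
    and p1: "measure M (fin M R1) > 0" and p2: "measure M (fin M R2) > 0"
    and ind1: "indep_rv (cond_meas M (fin M R1)) (sets (Fprime M F R1)) (shiftX X R1) Dmeas"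
    and ind2: "indep_rv (cond_meas M (fin M R2)) (sets (Fprime M F R2)) (shiftX X R2) Dmeas"
    and Gm: "\<Gamma> \<in> sets Dmeas"
    and G1: "graph M R1 = graph M R \<inter> {p. blackX X p \<in> \<Gamma>}"
    and G2: "graph M R2 = graph M R \<inter> {p. blackX X p \<notin> \<Gamma>}"
    and indI: "indep_rv (cond_meas M (fin M R)) (sets (Fprime M F R)) (\<lambda>\<omega>. indicator \<Gamma> (shiftX X R \<omega>) :: real) borel"
    and Mu: "prob_space Mu" and sMu: "sets Mu = sets Dmeas"
    and mG: "measure (cond_meas M (fin M R)) {\<omega> \<in> fin M R. shiftX X R \<omega> \<in> \<Gamma>} = measure Mu \<Gamma>"
    and d1: "distr (cond_meas M (fin M R1)) Dmeas (shiftX X R1) = uniform_measure Mu \<Gamma>"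
    and d2: "distr (cond_meas M (fin M R2)) Dmeas (shiftX X R2) = uniform_measure Mu (space Dmeas - \<Gamma>)"
  shows "indep_rv (cond_meas M (fin M R)) (sets (Fprime M F R)) (shiftX X R) Dmeas \<and>
         distr (cond_meas M (fin M R)) Dmeas (shiftX X R) = Mu"
proof -
  interpret Mu: prob_space Mu by fact
  interpret P: prob_space M by fact
  have G1': "graph M R1 = {p. blackX X p \<in> \<Gamma>} \<inter> graph M R" using G1 by blast
  have G2': "graph M R2 = {p. blackX X p \<notin> \<Gamma>} \<inter> graph M R" using G2 by blast
  note f1 = graph_sub_fin(1)[OF G1'] and eq1 = graph_sub_fin(2)[OF G1']
  note f2 = graph_sub_fin(1)[OF G2'] and eq2 = graph_sub_fin(2)[OF G2']
  have fin1: "fin M R1 = shiftX X R -` \<Gamma> \<inter> fin M R"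
    unfolding f1 using blackX_fin[of _ M R X] by auto
  have fin2: "fin M R2 = fin M R - shiftX X R -` \<Gamma>"
    unfolding f2 using blackX_fin[of _ M R X] by auto
  have fR: "fin M R \<in> sets M" and fR1: "fin M R1 \<in> sets M" and fR2: "fin M R2 \<in> sets M"
    using R R1 R2 by (simp_all add: fin_sets)
  have YR: "shiftX X R \<in> measurable M Dmeas" using shiftX_measurable[OF F L R] .
  have YR1: "shiftX X R1 \<in> measurable M Dmeas" using shiftX_measurable[OF F L R1] .
  have YR2: "shiftX X R2 \<in> measurable M Dmeas" using shiftX_measurable[OF F L R2] .
  have spMu: "space Mu = space Dmeas" using sMu by (rule sets_eq_imp_space_eq)
  have GMu: "\<Gamma> \<in> sets Mu" using Gm sMu by simp
  define q where "q = measure Mu \<Gamma>"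
  have "{\<omega> \<in> fin M R. shiftX X R \<omega> \<in> \<Gamma>} = fin M R1" unfolding fin1 by blast
  then have "measure M (fin M R1) / measure M (fin M R) = q"
    using mG cond_measure[OF M fR pR fR1] fin1 unfolding q_def by auto
  then have p1q: "measure M (fin M R1) = q * measure M (fin M R)" using pR by (simp add: field_simps)
  then have q0: "q > 0" using p1 pR by (simp add: zero_less_mult_iff)
  have s1': "fin M R1 \<subseteq> fin M R" unfolding fin1 by blast
  have "fin M R2 = fin M R - fin M R1" unfolding fin1 fin2 by blast
  then have "measure M (fin M R2) = measure M (fin M R) - measure M (fin M R1)"
    using P.finite_measure_Diff[OF fR fR1 s1'] by simp
  then have p2q: "measure M (fin M R2) = (1 - q) * measure M (fin M R)" using p1q by (simp add: algebra_simps)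
  then have q1: "1 - q > 0" using p2 pR by (simp add: zero_less_mult_iff)
  have DG: "space Dmeas - \<Gamma> \<in> sets Mu" using sets.compl_sets[OF GMu] spMu by simp
  have mDG: "measure Mu (space Dmeas - \<Gamma>) = 1 - q" unfolding q_def spMu[symmetric] using GMu by (rule Mu.prob_compl)
  have law1: "\<And>\<Lambda>. \<Lambda> \<in> sets Dmeas \<Longrightarrow> measure M (shiftX X R1 -` \<Lambda> \<inter> fin M R1) = measure M (fin M R1) * (measure Mu (\<Gamma> \<inter> \<Lambda>) / q)"
  proof -
    fix \<Lambda> :: "(real \<Rightarrow> real ^ 'd) set" assume Lm: "\<Lambda> \<in> sets Dmeas"
    have "measure M (shiftX X R1 -` \<Lambda> \<inter> fin M R1) / measure M (fin M R1) = measure (uniform_measure Mu \<Gamma>) \<Lambda>"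
      unfolding d1[symmetric] by (rule measure_distr_cond[OF M fR1 p1 YR1 Lm, symmetric])
    also have "\<dots> = measure Mu (\<Gamma> \<inter> \<Lambda>) / q"
      unfolding q_def by (rule measure_uniform_prob[OF Mu GMu]) (use Lm sMu q0 q_def in simp_all)
    finally show "measure M (shiftX X R1 -` \<Lambda> \<inter> fin M R1) = measure M (fin M R1) * (measure Mu (\<Gamma> \<inter> \<Lambda>) / q)"
      using p1 by (simp add: field_simps)
  qed
  have law2: "\<And>\<Lambda>. \<Lambda> \<in> sets Dmeas \<Longrightarrow> measure M (shiftX X R2 -` \<Lambda> \<inter> fin M R2) = measure M (fin M R2) * (measure Mu ((space Dmeas - \<Gamma>) \<inter> \<Lambda>) / (1 - q))"
  proof -
    fix \<Lambda> :: "(real \<Rightarrow> real ^ 'd) set" assume Lm: "\<Lambda> \<in> sets Dmeas"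
    have "measure M (shiftX X R2 -` \<Lambda> \<inter> fin M R2) / measure M (fin M R2) = measure (uniform_measure Mu (space Dmeas - \<Gamma>)) \<Lambda>"
      unfolding d2[symmetric] by (rule measure_distr_cond[OF M fR2 p2 YR2 Lm, symmetric])
    also have "\<dots> = measure Mu ((space Dmeas - \<Gamma>) \<inter> \<Lambda>) / (1 - q)"
      unfolding mDG[symmetric] by (rule measure_uniform_prob[OF Mu DG]) (use Lm sMu q1 mDG in simp_all)
    finally show "measure M (shiftX X R2 -` \<Lambda> \<inter> fin M R2) = measure M (fin M R2) * (measure Mu ((space Dmeas - \<Gamma>) \<inter> \<Lambda>) / (1 - q))"
      using p2 by (simp add: field_simps)
  qed
  have ae1: "AE \<omega> in M. (\<omega> \<in> fin M R1 \<longleftrightarrow> \<omega> \<in> fin M R1) \<and> (\<omega> \<in> fin M R1 \<longrightarrow> R1 \<omega> = R \<omega>)"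
    using eq1 by simp
  have ae2: "AE \<omega> in M. (\<omega> \<in> fin M R2 \<longleftrightarrow> \<omega> \<in> fin M R2) \<and> (\<omega> \<in> fin M R2 \<longrightarrow> R2 \<omega> = R \<omega>)"
    using eq2 by simp
  have s1: "fin M R1 \<subseteq> fin M R" and s2: "fin M R2 \<subseteq> fin M R" unfolding fin1 fin2 by blast+
  have U: "fin M R1 \<union> fin M R2 = fin M R" and Dj: "fin M R1 \<inter> fin M R2 = {}" unfolding fin1 fin2 by blast+
  have key: "\<And>a \<Lambda>. a \<in> gen M F R \<Longrightarrow> \<Lambda> \<in> sets Dmeas \<Longrightarrow>
       measure M (a \<inter> (shiftX X R -` \<Lambda> \<inter> fin M R)) = measure M a * measure Mu \<Lambda>"
  proof -
    fix a and \<Lambda> :: "(real \<Rightarrow> real ^ 'd) set" assume a: "a \<in> gen M F R" and Lm: "\<Lambda> \<in> sets Dmeas"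
    have aM: "a \<in> sets M" using gen_events[OF F R] a by blast
    have asub: "a \<subseteq> fin M R" using a by (rule gen_subset)
    have T: "a \<inter> (shiftX X R -` \<Lambda> \<inter> fin M R) \<in> sets M" using aM Y_pre_sets[OF YR fR Lm] by blast
    have pc1: "measure M (a \<inter> (shiftX X R -` \<Lambda> \<inter> fin M R) \<inter> fin M R1) = measure M (a \<inter> fin M R1) * (measure Mu (\<Gamma> \<inter> \<Lambda>) / q)"
      by (rule piece[OF M F L R R1 p1 ind1 fR1 s1 ae1 law1 a Lm])
    have pc2: "measure M (a \<inter> (shiftX X R -` \<Lambda> \<inter> fin M R) \<inter> fin M R2) = measure M (a \<inter> fin M R2) * (measure Mu ((space Dmeas - \<Gamma>) \<inter> \<Lambda>) / (1 - q))"
      by (rule piece[OF M F L R R2 p2 ind2 fR2 s2 ae2 law2 a Lm])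
    have "{1::real} \<in> sets borel" by simp
    moreover have "a \<in> sets (Fprime M F R)" using a gen_sub_Fprime by blast
    ultimately have "measure M (a \<inter> ((\<lambda>\<omega>. indicator \<Gamma> (shiftX X R \<omega>) :: real) -` {1} \<inter> fin M R)) * measure M (fin M R) =
       measure M a * measure M ((\<lambda>\<omega>. indicator \<Gamma> (shiftX X R \<omega>) :: real) -` {1} \<inter> fin M R)"
      using indI unfolding indep_rv_cond_iff[OF M fR pR] by blast
    moreover have "(\<lambda>\<omega>. indicator \<Gamma> (shiftX X R \<omega>) :: real) -` {1} \<inter> fin M R = fin M R1"
      unfolding fin1 by (auto simp: indicator_def)
    ultimately have "measure M (a \<inter> fin M R1) * measure M (fin M R) = measure M a * measure M (fin M R1)" by simp
    then have ma1: "measure M (a \<inter> fin M R1) = measure M a * q" using p1q pR by (simp add: field_simps)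
    have "measure M a = measure M (a \<inter> fin M R1) + measure M (a \<inter> fin M R2)"
      by (rule split_two[OF M fR1 fR2 U Dj aM asub])
    then have ma2: "measure M (a \<inter> fin M R2) = measure M a * (1 - q)" using ma1 by (simp add: algebra_simps)
    have "measure M (a \<inter> (shiftX X R -` \<Lambda> \<inter> fin M R)) =
        measure M (a \<inter> (shiftX X R -` \<Lambda> \<inter> fin M R) \<inter> fin M R1) + measure M (a \<inter> (shiftX X R -` \<Lambda> \<inter> fin M R) \<inter> fin M R2)"
      by (rule split_two[OF M fR1 fR2 U Dj T]) blast
    also have "\<dots> = measure M a * (measure Mu (\<Gamma> \<inter> \<Lambda>) + measure Mu ((space Dmeas - \<Gamma>) \<inter> \<Lambda>))"
      unfolding pc1 pc2 ma1 ma2 using q0 q1 by (simp add: field_simps)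
    also have "measure Mu (\<Gamma> \<inter> \<Lambda>) + measure Mu ((space Dmeas - \<Gamma>) \<inter> \<Lambda>) = measure Mu \<Lambda>"
    proof -
      have LMu: "\<Lambda> \<in> sets Mu" using Lm sMu by simp
      have "\<Lambda> = (\<Gamma> \<inter> \<Lambda>) \<union> ((space Dmeas - \<Gamma>) \<inter> \<Lambda>)" using sets.sets_into_space[OF LMu] spMu by blast
      then have "measure Mu \<Lambda> = measure Mu ((\<Gamma> \<inter> \<Lambda>) \<union> ((space Dmeas - \<Gamma>) \<inter> \<Lambda>))" by simp
      also have "\<dots> = measure Mu (\<Gamma> \<inter> \<Lambda>) + measure Mu ((space Dmeas - \<Gamma>) \<inter> \<Lambda>)"
        by (rule Mu.finite_measure_Union) (use GMu LMu DG in blast)+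
      finally show ?thesis by simp
    qed
    finally show "measure M (a \<inter> (shiftX X R -` \<Lambda> \<inter> fin M R)) = measure M a * measure Mu \<Lambda>" .
  qed
  have fz1: "indep_rv (cond_meas M (fin M R)) (sets (Fprime M F R)) (shiftX X R) Dmeas"
    by (rule finish(1)[where c="measure Mu", OF M F L R pR]) (fact key)
  have fz2: "\<And>\<Lambda>. \<Lambda> \<in> sets Dmeas \<Longrightarrow> measure M (shiftX X R -` \<Lambda> \<inter> fin M R) = measure M (fin M R) * measure Mu \<Lambda>"
    by (rule finish(2)[where c="measure Mu", OF M F L R pR]) (simp_all add: key)
  have "distr (cond_meas M (fin M R)) Dmeas (shiftX X R) = Mu"
  proof (rule distr_cond_eqI[OF M fR pR YR sMu])
    fix \<Lambda> :: "(real \<Rightarrow> real ^ 'd) set" assume Lm: "\<Lambda> \<in> sets Dmeas"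
    show "emeasure Mu \<Lambda> = ennreal (measure M (shiftX X R -` \<Lambda> \<inter> fin M R) / measure M (fin M R))"
      unfolding fz2[OF Lm] using pR by (simp add: Mu.emeasure_eq_measure)
  qed
  with fz1 show ?thesis by blast
qed



lemma evan_ae:
  assumes ev: "evan_eq M (graph M R1) (graph M R \<inter> A)"
  shows "AE \<omega> in M. (\<omega> \<in> fin M R1 \<longleftrightarrow> \<omega> \<in> {\<omega> \<in> fin M R. (\<omega>, enn2real (R \<omega>)) \<in> A}) \<and> (\<omega> \<in> fin M R1 \<longrightarrow> R1 \<omega> = R \<omega>)"
proof -
  obtain N where N: "N \<in> null_sets M" "fst ` ((graph M R1 - (graph M R \<inter> A)) \<union> ((graph M R \<inter> A) - graph M R1)) \<subseteq> N"
    using ev unfolding evan_eq_def by blast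
  show ?thesis
  proof (rule AE_I'[OF N(1)])
    show "{\<omega> \<in> space M. \<not> ((\<omega> \<in> fin M R1 \<longleftrightarrow> \<omega> \<in> {\<omega> \<in> fin M R. (\<omega>, enn2real (R \<omega>)) \<in> A}) \<and> (\<omega> \<in> fin M R1 \<longrightarrow> R1 \<omega> = R \<omega>))} \<subseteq> N"
    proof (rule subsetI, rule ccontr)
      fix \<omega> assume w: "\<omega> \<in> {\<omega> \<in> space M. \<not> ((\<omega> \<in> fin M R1 \<longleftrightarrow> \<omega> \<in> {\<omega> \<in> fin M R. (\<omega>, enn2real (R \<omega>)) \<in> A}) \<and> (\<omega> \<in> fin M R1 \<longrightarrow> R1 \<omega> = R \<omega>))}"
        and nN: "\<omega> \<notin> N"
      have c1: "\<And>t. (\<omega>, t) \<in> graph M R1 \<Longrightarrow> (\<omega>, t) \<in> graph M R \<inter> A"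
      proof (rule ccontr)
        fix t assume "(\<omega>, t) \<in> graph M R1" "(\<omega>, t) \<notin> graph M R \<inter> A"
        then have "\<omega> \<in> fst ` ((graph M R1 - (graph M R \<inter> A)) \<union> ((graph M R \<inter> A) - graph M R1))"
          by (intro image_eqI[of _ _ "(\<omega>, t)"]) auto
        then show False using N(2) nN by blast
      qed
      have c2: "\<And>t. (\<omega>, t) \<in> graph M R \<inter> A \<Longrightarrow> (\<omega>, t) \<in> graph M R1"
      proof (rule ccontr)
        fix t assume "(\<omega>, t) \<in> graph M R \<inter> A" "(\<omega>, t) \<notin> graph M R1"
        then have "\<omega> \<in> fst ` ((graph M R1 - (graph M R \<inter> A)) \<union> ((graph M R \<inter> A) - graph M R1))"
          by (intro image_eqI[of _ _ "(\<omega>, t)"]) auto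
        then show False using N(2) nN by blast
      qed
      have i1: "\<omega> \<in> fin M R1 \<Longrightarrow> \<omega> \<in> fin M R \<and> (\<omega>, enn2real (R \<omega>)) \<in> A \<and> R1 \<omega> = R \<omega>"
      proof -
        assume f: "\<omega> \<in> fin M R1"
        define t where "t = enn2real (R1 \<omega>)"
        have g1: "(\<omega>, t) \<in> graph M R1" unfolding t_def using f by (rule fin_graph)
        have gR: "\<omega> \<in> fin M R1 \<and> R1 \<omega> = ennreal t \<and> enn2real (R1 \<omega>) = t" by (rule graph_fin[OF g1])
        have g2: "(\<omega>, t) \<in> graph M R \<inter> A" by (rule c1[OF g1])
        then have gA: "(\<omega>, t) \<in> A" and gR2: "(\<omega>, t) \<in> graph M R" by simp_all
        have gRR: "\<omega> \<in> fin M R \<and> R \<omega> = ennreal t \<and> enn2real (R \<omega>) = t" by (rule graph_fin[OF gR2])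
        show ?thesis using gR gRR gA by (elim conjE) simp
      qed
      have i2: "\<omega> \<in> fin M R \<Longrightarrow> (\<omega>, enn2real (R \<omega>)) \<in> A \<Longrightarrow> \<omega> \<in> fin M R1"
      proof -
        assume f: "\<omega> \<in> fin M R" and a: "(\<omega>, enn2real (R \<omega>)) \<in> A"
        have "(\<omega>, enn2real (R \<omega>)) \<in> graph M R" using f by (rule fin_graph)
        then have "(\<omega>, enn2real (R \<omega>)) \<in> graph M R1" using a c2 by blast
        then show "\<omega> \<in> fin M R1" using graph_fin by metis
      qed
      have "(\<omega> \<in> fin M R1 \<longleftrightarrow> \<omega> \<in> {\<omega> \<in> fin M R. (\<omega>, enn2real (R \<omega>)) \<in> A}) \<and> (\<omega> \<in> fin M R1 \<longrightarrow> R1 \<omega> = R \<omega>)"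
        using i1 i2 by blast
      then show False using w by blast
    qed
  qed
qed

lemma part_IIi:
  fixes X :: "real \<Rightarrow> 'a \<Rightarrow> real ^ 'd"
  assumes M: "prob_space M" and F: "filtration_on M F" and L: "levy M F X"
    and R: "R \<in> borel_measurable M" and pR: "measure M (fin M R) > 0"
    and R1: "R1 \<in> borel_measurable M" and R2: "R2 \<in> borel_measurable M"
    and p1: "measure M (fin M R1) > 0" and p2: "measure M (fin M R2) > 0"
    and ind1: "indep_rv (cond_meas M (fin M R1)) (sets (Fprime M F R1)) (shiftX X R1) Dmeas"
    and ind2: "indep_rv (cond_meas M (fin M R2)) (sets (Fprime M F R2)) (shiftX X R2) Dmeas"
    and A: "A \<in> sets (optional M F)"
    and ev1: "evan_eq M (graph M R1) (graph M R \<inter> A)"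
    and ev2: "evan_eq M (graph M R2) (graph M R \<inter> ((space M \<times> {0..}) - A))"
    and dd: "distr (cond_meas M (fin M R1)) Dmeas (shiftX X R1) = distr (cond_meas M (fin M R2)) Dmeas (shiftX X R2)"
  shows "indep_rv (cond_meas M (fin M R)) (sets (Fprime M F R)) (shiftX X R) Dmeas \<and>
         distr (cond_meas M (fin M R)) Dmeas (shiftX X R) = distr (cond_meas M (fin M R1)) Dmeas (shiftX X R1)"
proof -
  define E1 where "E1 = {\<omega> \<in> fin M R. (\<omega>, enn2real (R \<omega>)) \<in> A}"
  define E2 where "E2 = fin M R - E1"
  have E2': "E2 = {\<omega> \<in> fin M R. (\<omega>, enn2real (R \<omega>)) \<in> (space M \<times> {0..}) - A}"
    unfolding E2_def E1_def by (auto simp: fin_def)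
  have "(\<lambda>p. indicator A p :: real) \<in> borel_measurable (optional M F)" using A by measurable
  then have E1g: "E1 \<in> gen M F R" unfolding E1_def gen_def
    by (intro CollectI exI[of _ "\<lambda>p. indicator A p :: real"] exI[of _ "{1::real}"]) (auto simp: indicator_def)
  have fR: "fin M R \<in> sets M" and fR1: "fin M R1 \<in> sets M" and fR2: "fin M R2 \<in> sets M"
    using R R1 R2 by (simp_all add: fin_sets)
  have E1M: "E1 \<in> sets M" using gen_events[OF F R] E1g by blast
  have E2M: "E2 \<in> sets M" unfolding E2_def using fR E1M by blast
  have s1: "E1 \<subseteq> fin M R" and s2: "E2 \<subseteq> fin M R" unfolding E2_def E1_def by blast+
  have U: "E1 \<union> E2 = fin M R" and Dj: "E1 \<inter> E2 = {}" unfolding E2_def E1_def by blast+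
  have ae1: "AE \<omega> in M. (\<omega> \<in> fin M R1 \<longleftrightarrow> \<omega> \<in> E1) \<and> (\<omega> \<in> fin M R1 \<longrightarrow> R1 \<omega> = R \<omega>)"
    unfolding E1_def by (rule evan_ae[OF ev1])
  have ae2: "AE \<omega> in M. (\<omega> \<in> fin M R2 \<longleftrightarrow> \<omega> \<in> E2) \<and> (\<omega> \<in> fin M R2 \<longrightarrow> R2 \<omega> = R \<omega>)"
    unfolding E2' by (rule evan_ae[OF ev2])
  have YR: "shiftX X R \<in> measurable M Dmeas" using shiftX_measurable[OF F L R] .
  have YR1: "shiftX X R1 \<in> measurable M Dmeas" using shiftX_measurable[OF F L R1] .
  have YR2: "shiftX X R2 \<in> measurable M Dmeas" using shiftX_measurable[OF F L R2] .
  define c where "c = (\<lambda>\<Lambda>. measure M (shiftX X R1 -` \<Lambda> \<inter> fin M R1) / measure M (fin M R1))"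
  have law1: "\<And>\<Lambda>. \<Lambda> \<in> sets Dmeas \<Longrightarrow> measure M (shiftX X R1 -` \<Lambda> \<inter> fin M R1) = measure M (fin M R1) * c \<Lambda>"
    unfolding c_def using p1 by simp
  have law2: "\<And>\<Lambda>. \<Lambda> \<in> sets Dmeas \<Longrightarrow> measure M (shiftX X R2 -` \<Lambda> \<inter> fin M R2) = measure M (fin M R2) * c \<Lambda>"
  proof -
    fix \<Lambda> :: "(real \<Rightarrow> real ^ 'd) set" assume Lm: "\<Lambda> \<in> sets Dmeas"
    have "measure M (shiftX X R2 -` \<Lambda> \<inter> fin M R2) / measure M (fin M R2) = c \<Lambda>"
      unfolding c_def measure_distr_cond[OF M fR2 p2 YR2 Lm, symmetric] measure_distr_cond[OF M fR1 p1 YR1 Lm, symmetric] dd ..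
    then show "measure M (shiftX X R2 -` \<Lambda> \<inter> fin M R2) = measure M (fin M R2) * c \<Lambda>"
      using p2 by (simp add: field_simps)
  qed
  have key: "\<And>a \<Lambda>. a \<in> gen M F R \<Longrightarrow> \<Lambda> \<in> sets Dmeas \<Longrightarrow>
       measure M (a \<inter> (shiftX X R -` \<Lambda> \<inter> fin M R)) = measure M a * c \<Lambda>"
  proof -
    fix a and \<Lambda> :: "(real \<Rightarrow> real ^ 'd) set" assume a: "a \<in> gen M F R" and Lm: "\<Lambda> \<in> sets Dmeas"
    have aM: "a \<in> sets M" using gen_events[OF F R] a by blast
    have asub: "a \<subseteq> fin M R" using a by (rule gen_subset)
    have T: "a \<inter> (shiftX X R -` \<Lambda> \<inter> fin M R) \<in> sets M" using aM Y_pre_sets[OF YR fR Lm] by blast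
    have pc1: "measure M (a \<inter> (shiftX X R -` \<Lambda> \<inter> fin M R) \<inter> E1) = measure M (a \<inter> E1) * c \<Lambda>"
      by (rule piece[OF M F L R R1 p1 ind1 E1M s1 ae1 law1 a Lm])
    have pc2: "measure M (a \<inter> (shiftX X R -` \<Lambda> \<inter> fin M R) \<inter> E2) = measure M (a \<inter> E2) * c \<Lambda>"
      by (rule piece[OF M F L R R2 p2 ind2 E2M s2 ae2 law2 a Lm])
    have "measure M a = measure M (a \<inter> E1) + measure M (a \<inter> E2)"
      by (rule split_two[OF M E1M E2M U Dj aM asub])
    moreover have "measure M (a \<inter> (shiftX X R -` \<Lambda> \<inter> fin M R)) =
        measure M (a \<inter> (shiftX X R -` \<Lambda> \<inter> fin M R) \<inter> E1) + measure M (a \<inter> (shiftX X R -` \<Lambda> \<inter> fin M R) \<inter> E2)"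
      by (rule split_two[OF M E1M E2M U Dj T]) blast
    ultimately show "measure M (a \<inter> (shiftX X R -` \<Lambda> \<inter> fin M R)) = measure M a * c \<Lambda>"
      unfolding pc1 pc2 by (simp add: algebra_simps)
  qed
  have fz1: "indep_rv (cond_meas M (fin M R)) (sets (Fprime M F R)) (shiftX X R) Dmeas"
    by (rule finish(1)[where c=c, OF M F L R pR]) (simp_all add: key)
  have fz2: "\<And>\<Lambda>. \<Lambda> \<in> sets Dmeas \<Longrightarrow> measure M (shiftX X R -` \<Lambda> \<inter> fin M R) = measure M (fin M R) * c \<Lambda>"
    by (rule finish(2)[where c=c, OF M F L R pR]) (simp_all add: key)
  have "distr (cond_meas M (fin M R)) Dmeas (shiftX X R) = distr (cond_meas M (fin M R1)) Dmeas (shiftX X R1)"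
  proof (rule distr_cond_eqI[OF M fR pR YR])
    show "sets (distr (cond_meas M (fin M R1)) Dmeas (shiftX X R1)) = sets Dmeas" by simp
    fix \<Lambda> :: "(real \<Rightarrow> real ^ 'd) set" assume Lm: "\<Lambda> \<in> sets Dmeas"
    interpret D: prob_space "distr (cond_meas M (fin M R1)) Dmeas (shiftX X R1)"
      by (rule prob_space_distr_cond[OF M fR1 p1 YR1])
    show "emeasure (distr (cond_meas M (fin M R1)) Dmeas (shiftX X R1)) \<Lambda> =
        ennreal (measure M (shiftX X R -` \<Lambda> \<inter> fin M R) / measure M (fin M R))"
      unfolding D.emeasure_eq_measure measure_distr_cond[OF M fR1 p1 YR1 Lm] fz2[OF Lm]
      using pR unfolding c_def by simp
  qed
  with fz1 show ?thesis by blast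
qed


theorem lemma3p2:
  fixes M :: "'a measure" and F :: "real \<Rightarrow> 'a measure"
    and X :: "real \<Rightarrow> 'a \<Rightarrow> real ^ 'd" and R :: "'a \<Rightarrow> ennreal"
  assumes "prob_space M"
    and "filtration_on M F"
    and "levy M F X"
    and "R \<in> borel_measurable M"
    and "measure M (fin M R) > 0"
  shows
   "(indep_rv (cond_meas M (fin M R)) (sets (Fprime M F R)) (shiftX X R) Dmeas \<longrightarrow>
      (\<forall>P A. P \<in> borel_measurable M \<and> measure M (fin M P) > 0 \<and>
             A \<in> sets (optional M F) \<union> sigma_blackX M X \<and> graph M P = A \<inter> graph M R \<longrightarrow>
        (A \<in> sets (optional M F) \<longrightarrow>
           indep_rv (cond_meas M (fin M P)) (sets (Fprime M F P)) (shiftX X P) Dmeas \<and>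
           distr (cond_meas M (fin M P)) Dmeas (shiftX X P) =
             distr (cond_meas M (fin M R)) Dmeas (shiftX X R)) \<and>
        (\<forall>\<Gamma> \<in> sets Dmeas. A = blackX X -` \<Gamma> \<inter> (space M \<times> {0..}) \<longrightarrow>
           indep_rv (cond_meas M (fin M P)) (sets (Fprime M F P)) (shiftX X P) Dmeas \<and>
           distr (cond_meas M (fin M P)) Dmeas (shiftX X P) =
             uniform_measure (distr (cond_meas M (fin M R)) Dmeas (shiftX X R)) \<Gamma>)))
    \<and>
    (\<forall>R1 R2. R1 \<in> borel_measurable M \<and> R2 \<in> borel_measurable M \<and>
        measure M (fin M R1) > 0 \<and> measure M (fin M R2) > 0 \<and>
        indep_rv (cond_meas M (fin M R1)) (sets (Fprime M F R1)) (shiftX X R1) Dmeas \<and>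
        indep_rv (cond_meas M (fin M R2)) (sets (Fprime M F R2)) (shiftX X R2) Dmeas \<longrightarrow>
      (\<forall>A \<in> sets (optional M F).
         evan_eq M (graph M R1) (graph M R \<inter> A) \<and>
         evan_eq M (graph M R2) (graph M R \<inter> ((space M \<times> {0..}) - A)) \<and>
         distr (cond_meas M (fin M R1)) Dmeas (shiftX X R1) =
           distr (cond_meas M (fin M R2)) Dmeas (shiftX X R2) \<longrightarrow>
         indep_rv (cond_meas M (fin M R)) (sets (Fprime M F R)) (shiftX X R) Dmeas \<and>
         distr (cond_meas M (fin M R)) Dmeas (shiftX X R) =
           distr (cond_meas M (fin M R1)) Dmeas (shiftX X R1)) \<and>
      (\<forall>\<Gamma> \<in> sets Dmeas. \<forall>\<M> :: (real \<Rightarrow> real ^ 'd) measure.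
         graph M R1 = graph M R \<inter> {p. blackX X p \<in> \<Gamma>} \<and>
         graph M R2 = graph M R \<inter> {p. blackX X p \<notin> \<Gamma>} \<and>
         indep_rv (cond_meas M (fin M R)) (sets (Fprime M F R))
           (\<lambda>\<omega>. indicator \<Gamma> (shiftX X R \<omega>) :: real) borel \<and>
         prob_space \<M> \<and> sets \<M> = sets Dmeas \<and>
         measure (cond_meas M (fin M R)) {\<omega> \<in> fin M R. shiftX X R \<omega> \<in> \<Gamma>} = measure \<M> \<Gamma> \<and>
         distr (cond_meas M (fin M R1)) Dmeas (shiftX X R1) = uniform_measure \<M> \<Gamma> \<and>
         distr (cond_meas M (fin M R2)) Dmeas (shiftX X R2) = uniform_measure \<M> (space Dmeas - \<Gamma>) \<longrightarrow>
         indep_rv (cond_meas M (fin M R)) (sets (Fprime M F R)) (shiftX X R) Dmeas \<and>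
         distr (cond_meas M (fin M R)) Dmeas (shiftX X R) = \<M>))"
    apply (rule conjI)
  subgoal
    apply (intro impI allI)
    apply (elim conjE)
    apply (rule conjI)
    subgoal by (intro impI, rule part_Ia[OF assms(1-5)]) assumption+
    subgoal by (intro ballI impI, rule part_Ib[OF assms(1-5)]) simp_all
    done
  subgoal
    apply (intro impI allI)
    apply (elim conjE)
    apply (rule conjI)
    subgoal by (intro ballI impI, elim conjE, rule part_IIi[OF assms(1-5)]) assumption+
    subgoal by (intro ballI allI impI, elim conjE, rule part_IIii[OF assms(1-5)]) assumption+
    done
  done

end
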